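(* Let $f(z)=\sum_{n=0}^{\infty}a_{n}z^{n}$ be an entire function with $a_{0}\cdot a_{n}>0$ for all $n\ge0$, of order $\rho(f)=\limsup_{n\to\infty}\frac{n\log n}{-\log|a_{n}|}<1$, having a nonzero root, and write $\frac{f(z)}{f(0)}=\prod_{n=1}^{\infty}\left(1+\frac{z}{\lambda_{n}}\right)$ with $\sum_{n}1/|\lambda_n|<\infty$, where $\{-\lambda_n\}$ are the zeros of $f$ with multiplicity. Assume there exists $\beta_{0}\in(0,1)$ with $\Re(\lambda_{n})\ge\beta_{0}|\lambda_{n}|>0$ for all $n\in\mathbb{N}$. Define $$\Theta(t)=\sum_{n=1}^{\infty}e^{-\lambda_{n}t},\quad t>0.$$ Then $\Theta\in C^{\infty}(0,\infty)$, and for any $k\in\mathbb{N}_{0}$, any $\alpha$ with $\rho(f)<\alpha<1$, and any $\beta$ with $0<\beta<\beta_{0}\inf\{|\lambda_{n}|:n\in\mathbb{N}\}$, $$\Theta^{(k)}(t)=\mathcal{O}\left(t^{-\alpha-k}\right)\ (t\to0^{+}),\qquad \Theta^{(k)}(t)=\mathcal{O}\left(e^{-\beta t}\right)\ (t\to+\infty).$$ Furthermore, for all $k\in\mathbb{N}_{0}$ and $x\ge0$, $$\int_{0}^{\infty}t^{k}e^{-xt}|\Theta(t)|\,dt\le\frac{k!}{\beta_{0}^{k+1}}\sum_{n=1}^{\infty}\frac{1}{|\lambda_{n}|^{k+1}}<\infty$$ and $$(-1)^{k}\left(\frac{f'(x)}{f(x)}\right)^{(k)}=\sum_{n=1}^{\infty}\frac{k!}{(x+\lambda_{n})^{k+1}}=\int_{0}^{\infty}e^{-xt}t^{k}\Theta(t)\,dt.$$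 *)

theory Defs
  imports "HOL-Analysis.Analysis" "HOL-Library.Landau_Symbols"
begin

definition coeff_order :: "(nat \<Rightarrow> real) \<Rightarrow> ereal" where
  "coeff_order a = limsup (\<lambda>n. ereal (real n * ln (real n) / (- ln \<bar>a n\<bar>)))"

definition vderiv_iter :: "nat \<Rightarrow> (real \<Rightarrow> 'a::real_normed_vector) \<Rightarrow> real \<Rightarrow> 'a" where
  "vderiv_iter k g = ((\<lambda>h t. vector_derivative h (at t)) ^^ k) g"

end

theory Submission
  imports Defs "HOL-Real_Asymp.Real_Asymp"
begin

lemma pow_exp_bound:
  fixes b :: real and N :: nat
  assumes "b > 0" "u \<ge> 0"
  shows "u ^ N * exp (- b * u) \<le> (real N / b) ^ N"
proof (cases "N = 0")
  case True then show ?thesis using assms by simp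
next
  case False
  have "(b * u / real N) ^ N \<le> (1 + b * u / real N) ^ N"
    using assms by (intro power_mono) auto
  also have "\<dots> \<le> exp (b * u)"
    using assms False by (intro exp_ge_one_plus_x_over_n_power_n) (auto, smt (verit) mult_nonneg_nonneg of_nat_0_le_iff)
  finally have *: "(b * u / real N) ^ N \<le> exp (b * u)" .
  have e: "real N / b * (b * u / real N) = u" using assms False by simp
  have "u ^ N = (real N / b) ^ N * (b * u / real N) ^ N"
    unfolding power_mult_distrib[symmetric] e ..
  also have "\<dots> \<le> (real N / b) ^ N * exp (b * u)"
    using * assms by (intro mult_left_mono) auto
  finally have "u ^ N \<le> (real N / b) ^ N * exp (b * u)" .
  then have "u ^ N * exp (- b * u) \<le> (real N / b) ^ N * exp (b * u) * exp (- b * u)"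
    by (intro mult_right_mono) auto
  also have "\<dots> = (real N / b) ^ N" by (simp add: exp_minus field_simps)
  finally show ?thesis .
qed

lemma powr_exp_bound:
  fixes b s :: real
  assumes "b > 0" "s \<ge> 0"
  shows "\<exists>C>0. \<forall>u\<ge>0. u powr s * exp (- b * u) \<le> C"
proof -
  define N where "N = nat \<lceil>s\<rceil>"
  have sN: "s \<le> real N" unfolding N_def by linarith
  show ?thesis
  proof (intro exI[of _ "1 + (real N / b) ^ N"] conjI allI impI)
    show "0 < 1 + (real N / b) ^ N" using assms by (simp add: add_pos_nonneg)
    fix u :: real assume u: "u \<ge> 0"
    show "u powr s * exp (- b * u) \<le> 1 + (real N / b) ^ N"
    proof (cases "u \<le> 1")
      case True
      have "u powr s \<le> 1" using u True assms by (intro powr_le1) auto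
      moreover have "exp (- b * u) \<le> 1" using assms u by simp
      ultimately have "u powr s * exp (- b * u) \<le> 1"
        by (metis exp_ge_zero mult_le_one powr_ge_zero)
      moreover have "0 \<le> (real N / b) ^ N" using assms by simp
      ultimately show ?thesis by linarith
    next
      case False
      have "u powr s \<le> u powr real N" using False sN by (intro powr_mono) auto
      also have "\<dots> = u ^ N" using False by (simp add: powr_realpow)
      finally have "u powr s * exp (- b * u) \<le> u ^ N * exp (- b * u)"
        by (intro mult_right_mono) auto
      also have "\<dots> \<le> (real N / b) ^ N" using pow_exp_bound[OF assms(1) u] .
      finally show ?thesis by simp
    qed
  qed
qed

fun FR :: "real \<Rightarrow> nat \<Rightarrow> real \<Rightarrow> real" where
  "FR c 0 t = - exp (- c * t) / c"
| "FR c (Suc k) t = - (t ^ Suc k * exp (- c * t)) / c + real (Suc k) / c * FR c k t"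

lemma FR_deriv: "c > 0 \<Longrightarrow> (FR c k has_real_derivative t ^ k * exp (- c * t)) (at t)"
proof (induction k)
  case 0 then show ?case by (auto intro!: derivative_eq_intros)
next
  case (Suc k)
  have 1: "((\<lambda>t. - (t ^ Suc k * exp (- c * t)) / c) has_real_derivative
      (- ((real (Suc k) * t ^ k * exp (- c * t) - exp (- c * t) * c * t ^ Suc k) / c))) (at t)"
    using Suc.prems by (auto intro!: derivative_eq_intros simp del: power_Suc)
  have 2: "((\<lambda>t. real (Suc k) / c * FR c k t) has_real_derivative real (Suc k) / c * (t ^ k * exp (- c * t))) (at t)"
    by (intro DERIV_cmult Suc.IH Suc.prems)
  have e: "FR c (Suc k) = (\<lambda>t. - (t ^ Suc k * exp (- c * t)) / c + real (Suc k) / c * FR c k t)"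
    by (rule ext) simp
  show ?case unfolding e
    by (rule DERIV_cong[OF DERIV_add[OF 1 2]]) (use Suc.prems in \<open>simp add: field_simps\<close>)
qed

lemma FR_0: "c > 0 \<Longrightarrow> FR c k 0 = - fact k / c ^ (k + 1)"
proof (induction k)
  case (Suc k)
  have "FR c (Suc k) 0 = real (Suc k) / c * FR c k 0" by simp
  also have "\<dots> = real (Suc k) / c * (- fact k / c ^ (k + 1))" using Suc by simp
  also have "\<dots> = - fact (Suc k) / c ^ (Suc k + 1)" using Suc.prems by (simp add: field_simps)
  finally show ?case .
qed simp

lemma FR_lim: "c > 0 \<Longrightarrow> (FR c k \<longlongrightarrow> 0) at_top"
proof (induction k)
  case 0 then show ?case by simp real_asymp
next
  case (Suc k)
  have "((\<lambda>t. - (t ^ Suc k * exp (- c * t)) / c) \<longlongrightarrow> 0) at_top"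
    using Suc by real_asymp
  moreover have "((\<lambda>t. real (Suc k) / c * FR c k t) \<longlongrightarrow> real (Suc k) / c * 0) at_top"
    by (intro tendsto_mult tendsto_const Suc.IH Suc.prems)
  ultimately show ?case using tendsto_add by fastforce
qed

lemma einterval_0_inf: "einterval 0 \<infinity> = {0<..}"
  by (auto simp: einterval_def zero_ereal_def)

lemma laplace_real:
  fixes c :: real assumes c: "c > 0"
  shows "set_integrable lborel {0<..} (\<lambda>t. t ^ k * exp (- c * t))"
    and "(LINT t:{0<..}|lborel. t ^ k * exp (- c * t)) = fact k / c ^ (k + 1)"
proof -
  have A: "((FR c k \<circ> real_of_ereal) \<longlongrightarrow> - fact k / c ^ (k + 1)) (at_right 0)"
  proof -
    have "isCont (FR c k) 0" using FR_deriv[OF c] DERIV_isCont by blast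
    then have "(FR c k \<longlongrightarrow> FR c k 0) (at_right 0)"
      by (simp add: isCont_def filterlim_at_split)
    then show ?thesis using FR_0[OF c] by (simp add: zero_ereal_def ereal_tendsto_simps)
  qed
  have B: "((FR c k \<circ> real_of_ereal) \<longlongrightarrow> 0) (at_left \<infinity>)"
    using FR_lim[OF c] by (simp add: ereal_tendsto_simps)
  note R = interval_integral_FTC_nonneg[of 0 \<infinity> "FR c k" "\<lambda>t. t ^ k * exp (- c * t)", OF _ FR_deriv[OF c] _ _ A B]
  have R1: "set_integrable lborel {0<..} (\<lambda>t. t ^ k * exp (- c * t))"
    using R(1) by (auto simp: einterval_0_inf zero_ereal_def intro!: continuous_intros)
  then show "set_integrable lborel {0<..} (\<lambda>t. t ^ k * exp (- c * t))" .
  have "(LBINT t=0..\<infinity>. t ^ k * exp (- c * t)) = fact k / c ^ (k + 1)"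
    using R(2) by (auto simp: einterval_0_inf zero_ereal_def intro!: continuous_intros)
  then show "(LINT t:{0<..}|lborel. t ^ k * exp (- c * t)) = fact k / c ^ (k + 1)"
    by (simp add: interval_lebesgue_integral_def einterval_0_inf)
qed

fun FC :: "complex \<Rightarrow> nat \<Rightarrow> complex \<Rightarrow> complex" where
  "FC z 0 w = - exp (- (z * w)) / z"
| "FC z (Suc k) w = - (w ^ Suc k * exp (- (z * w))) / z + of_nat (Suc k) / z * FC z k w"

lemma FC_deriv: "z \<noteq> 0 \<Longrightarrow> (FC z k has_field_derivative w ^ k * exp (- (z * w))) (at w)"
proof (induction k)
  case 0 then show ?case by (auto intro!: derivative_eq_intros)
next
  case (Suc k)
  have 1: "((\<lambda>w. - (w ^ Suc k * exp (- (z * w))) / z) has_field_derivative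
      (- ((of_nat (Suc k) * w ^ k * exp (- (z * w)) - exp (- (z * w)) * z * w ^ Suc k) / z))) (at w)"
    using Suc.prems by (auto intro!: derivative_eq_intros simp del: power_Suc)
  have 2: "((\<lambda>w. of_nat (Suc k) / z * FC z k w) has_field_derivative of_nat (Suc k) / z * (w ^ k * exp (- (z * w)))) (at w)"
    by (intro DERIV_cmult Suc.IH Suc.prems)
  have e: "FC z (Suc k) = (\<lambda>w. - (w ^ Suc k * exp (- (z * w))) / z + of_nat (Suc k) / z * FC z k w)"
    by (rule ext) simp
  show ?case unfolding e
    by (rule DERIV_cong[OF DERIV_add[OF 1 2]]) (use Suc.prems in \<open>simp add: field_simps\<close>)
qed

lemma FC_0: "z \<noteq> 0 \<Longrightarrow> FC z k 0 = - fact k / z ^ (k + 1)"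
proof (induction k)
  case (Suc k)
  have "FC z (Suc k) 0 = of_nat (Suc k) / z * FC z k 0" by simp
  also have "\<dots> = of_nat (Suc k) / z * (- fact k / z ^ (k + 1))" using Suc by simp
  also have "\<dots> = - fact (Suc k) / z ^ (Suc k + 1)" using Suc.prems by (simp add: field_simps)
  finally show ?case .
qed simp

lemma norm_lap_term: "t \<ge> 0 \<Longrightarrow> norm (complex_of_real t ^ k * exp (- (z * complex_of_real t))) = t ^ k * exp (- Re z * t)"
  by (simp add: norm_mult norm_power norm_exp_eq_Re)

lemma FC_lim: assumes "Re z > 0" shows "((\<lambda>t. FC z k (complex_of_real t)) \<longlongrightarrow> 0) at_top"
  using assms
proof (induction k)
  case 0
  have "z \<noteq> 0" using 0 by auto
  have "((\<lambda>t. exp (- Re z * t)) \<longlongrightarrow> 0) at_top" using 0 by real_asymp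
  then have "((\<lambda>t. exp (- Re z * t) / norm z) \<longlongrightarrow> 0) at_top" by (rule tendsto_divide_zero)
  then have "((\<lambda>t. norm (FC z 0 (complex_of_real t))) \<longlongrightarrow> 0) at_top"
    by (simp add: norm_divide norm_exp_eq_Re)
  then show ?case by (simp only: tendsto_norm_zero_iff)
next
  case (Suc k)
  have "((\<lambda>t. t ^ Suc k * exp (- Re z * t)) \<longlongrightarrow> 0) at_top" using Suc by real_asymp
  then have "((\<lambda>t. t ^ Suc k * exp (- Re z * t) / norm z) \<longlongrightarrow> 0) at_top" by (rule tendsto_divide_zero)
  moreover have "eventually (\<lambda>t. norm (- (complex_of_real t ^ Suc k * exp (- (z * complex_of_real t))) / z) = t ^ Suc k * exp (- Re z * t) / norm z) at_top"
    using eventually_ge_at_top[of 0] by eventually_elim (subst norm_divide, subst norm_minus_cancel, subst norm_lap_term, auto)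
  ultimately have "((\<lambda>t. norm (- (complex_of_real t ^ Suc k * exp (- (z * complex_of_real t))) / z)) \<longlongrightarrow> 0) at_top"
    by (simp add: tendsto_cong)
  then have 1: "((\<lambda>t. - (complex_of_real t ^ Suc k * exp (- (z * complex_of_real t))) / z) \<longlongrightarrow> 0) at_top"
    by (simp only: tendsto_norm_zero_iff)
  have 2: "((\<lambda>t. of_nat (Suc k) / z * FC z k (complex_of_real t)) \<longlongrightarrow> of_nat (Suc k) / z * 0) at_top"
    by (intro tendsto_mult tendsto_const Suc.IH Suc.prems)
  show ?case using tendsto_add[OF 1 2] by simp
qed

lemma laplace_complex:
  fixes z :: complex assumes z: "Re z > 0"
  shows "set_integrable lborel {0<..} (\<lambda>t. complex_of_real t ^ k * exp (- (z * complex_of_real t)))"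
    and "(LINT t:{0<..}|lborel. complex_of_real t ^ k * exp (- (z * complex_of_real t))) = fact k / z ^ (k + 1)"
proof -
  have z0: "z \<noteq> 0" using z by auto
  let ?f = "\<lambda>t. complex_of_real t ^ k * exp (- (z * complex_of_real t))"
  let ?F = "\<lambda>t. FC z k (complex_of_real t)"
  have cont: "continuous_on UNIV ?f" by (intro continuous_intros)
  show I: "set_integrable lborel {0<..} ?f"
  proof (rule set_integrable_bound[OF laplace_real(1)[OF z, of k]])
    show "set_borel_measurable lborel {0<..} ?f"
      unfolding set_borel_measurable_def
      unfolding measurable_lborel2
      by (rule borel_measurable_continuous_on_indicator) (auto intro!: continuous_intros)
    show "AE x in lborel. x \<in> {0<..} \<longrightarrow> norm (?f x) \<le> norm (x ^ k * exp (- Re z * x))"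
      by (auto simp: norm_lap_term)
  qed
  have D: "\<And>x. (?F has_vector_derivative ?f x) (at x)"
    by (rule has_vector_derivative_real_field) (rule FC_deriv[OF z0])
  have A: "((?F \<circ> real_of_ereal) \<longlongrightarrow> - fact k / z ^ (k + 1)) (at_right 0)"
  proof -
    have "isCont ?F 0" using D has_vector_derivative_continuous by blast
    then have "(?F \<longlongrightarrow> ?F 0) (at_right 0)"
      by (simp add: isCont_def filterlim_at_split)
    then show ?thesis using FC_0[OF z0] by (simp add: zero_ereal_def ereal_tendsto_simps)
  qed
  have B: "((?F \<circ> real_of_ereal) \<longlongrightarrow> 0) (at_left \<infinity>)"
    using FC_lim[OF z] by (simp add: ereal_tendsto_simps)
  have "(LBINT t=0..\<infinity>. ?f t) = 0 - (- fact k / z ^ (k + 1))"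
    by (rule interval_integral_FTC_integrable[OF _ D _ _ A B])
       (auto simp: einterval_0_inf I zero_ereal_def intro!: continuous_intros)
  then show "(LINT t:{0<..}|lborel. ?f t) = fact k / z ^ (k + 1)"
    by (simp add: interval_lebesgue_integral_def einterval_0_inf)
qed

locale lamsys =
  fixes lam :: "nat \<Rightarrow> complex" and \<beta>0 :: real
  assumes beta0_pos: "0 < \<beta>0"
    and sector: "\<And>n. Re (lam n) \<ge> \<beta>0 * norm (lam n) \<and> \<beta>0 * norm (lam n) > 0"
    and summable_inv: "summable (\<lambda>n. 1 / norm (lam n))"
begin

lemma r_pos: "norm (lam n) > 0"
  using sector[of n] beta0_pos by (simp add: zero_less_mult_iff)

lemma Re_ge: "Re (lam n) \<ge> \<beta>0 * norm (lam n)"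
  using sector[of n] by simp

lemma Re_pos: "Re (lam n) > 0"
  using sector[of n] by linarith

lemma ev_r_ge1: "eventually (\<lambda>n. norm (lam n) \<ge> 1) sequentially"
proof -
  have "(\<lambda>n. 1 / norm (lam n)) \<longlonglongrightarrow> 0" using summable_LIMSEQ_zero[OF summable_inv] .
  then have "eventually (\<lambda>n. 1 / norm (lam n) < 1) sequentially"
    by (rule order_tendstoD) simp
  then show ?thesis
  proof eventually_elim
    case (elim n) then show ?case using r_pos[of n] by (simp add: field_simps)
  qed
qed

lemma r_lower: "\<exists>m>0. \<forall>n. m \<le> norm (lam n)"
proof -
  obtain N where N: "\<And>n. n \<ge> N \<Longrightarrow> norm (lam n) \<ge> 1"
    using ev_r_ge1 unfolding eventually_sequentially by blast
  define m where "m = Min (insert 1 ((\<lambda>n. norm (lam n)) ` {..<N}))"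
  have "m > 0" unfolding m_def using r_pos by (subst Min_gr_iff) auto
  moreover have "m \<le> norm (lam n)" for n
  proof (cases "n < N")
    case True then show ?thesis unfolding m_def by (intro Min_le) auto
  next
    case False
    have "m \<le> 1" unfolding m_def by (intro Min_le) auto
    then show ?thesis using N[of n] False by simp
  qed
  ultimately show ?thesis by blast
qed

lemma summable_pow: "summable (\<lambda>n. 1 / norm (lam n) ^ (k + 1))"
proof (rule summable_comparison_test_ev[OF _ summable_inv])
  show "eventually (\<lambda>n. norm (1 / norm (lam n) ^ (k + 1)) \<le> 1 / norm (lam n)) sequentially"
    using ev_r_ge1
  proof eventually_elim
    case (elim n)
    have "norm (lam n) \<le> norm (lam n) ^ (k + 1)"
      using elim by (metis One_nat_def le_add2 power_increasing power_one_right)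
    then show ?case using r_pos[of n] by (simp add: frac_le)
  qed
qed

lemma summable_rk_exp:
  assumes "b > 0"
  shows "summable (\<lambda>n. norm (lam n) ^ k * exp (- b * norm (lam n)))"
proof -
  obtain C where C: "C > 0" "\<And>u. u \<ge> 0 \<Longrightarrow> u powr real (k + 1) * exp (- b * u) \<le> C"
    using powr_exp_bound[OF assms, of "real (k + 1)"] by auto
  show ?thesis
  proof (rule summable_comparison_test[OF _ summable_mult[OF summable_inv, of C]])
    show "\<exists>N. \<forall>n\<ge>N. norm (norm (lam n) ^ k * exp (- b * norm (lam n))) \<le> C * (1 / norm (lam n))"
    proof (intro exI allI impI)
      fix n :: nat
      have rp: "norm (lam n) > 0" by (rule r_pos)
      have "norm (lam n) powr real (k + 1) = norm (lam n) ^ (k + 1)"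
        using powr_realpow[OF rp] .
      then have "norm (lam n) ^ (k + 1) * exp (- b * norm (lam n)) \<le> C"
        using C(2)[of "norm (lam n)"] rp by simp
      then have "norm (lam n) * (norm (lam n) ^ k * exp (- b * norm (lam n))) \<le> C"
        by (simp add: mult_ac)
      then have "norm (lam n) ^ k * exp (- b * norm (lam n)) \<le> C / norm (lam n)"
        using rp by (simp add: field_simps)
      then show "norm (norm (lam n) ^ k * exp (- b * norm (lam n))) \<le> C * (1 / norm (lam n))"
        by simp
    qed
  qed
qed

definition th :: "nat \<Rightarrow> nat \<Rightarrow> complex \<Rightarrow> complex" where
  "th k n w = (- lam n) ^ k * exp (- (lam n * w))"

definition G :: "nat \<Rightarrow> real \<Rightarrow> complex" where
  "G k t = (\<Sum>n. th k n (complex_of_real t))"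

lemma norm_th_real:
  assumes "t \<ge> 0"
  shows "norm (th k n (complex_of_real t)) \<le> norm (lam n) ^ k * exp (- (\<beta>0 * t) * norm (lam n))"
proof -
  have "norm (th k n (complex_of_real t)) = norm (lam n) ^ k * exp (- (Re (lam n) * t))"
    by (simp add: th_def norm_mult norm_power norm_exp_eq_Re)
  also have "\<dots> \<le> norm (lam n) ^ k * exp (- (\<beta>0 * t) * norm (lam n))"
  proof -
    have "\<beta>0 * t * norm (lam n) \<le> Re (lam n) * t"
      using mult_right_mono[OF Re_ge[of n] assms] by (simp add: mult_ac)
    then show ?thesis by (intro mult_left_mono) auto
  qed
  finally show ?thesis .
qed

lemma summable_th_real:
  assumes "t > 0"
  shows "summable (\<lambda>n. norm (th k n (complex_of_real t)))"
  by (rule summable_comparison_test[OF _ summable_rk_exp[of "\<beta>0 * t" k]])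
     (use assms beta0_pos norm_th_real in auto)

lemma norm_G_le:
  assumes "t > 0"
  shows "norm (G k t) \<le> (\<Sum>n. norm (lam n) ^ k * exp (- (\<beta>0 * t) * norm (lam n)))"
proof -
  have "norm (G k t) \<le> (\<Sum>n. norm (th k n (complex_of_real t)))"
    unfolding G_def by (rule summable_norm[OF summable_th_real[OF assms]])
  also have "\<dots> \<le> (\<Sum>n. norm (lam n) ^ k * exp (- (\<beta>0 * t) * norm (lam n)))"
    using assms beta0_pos
    by (intro suminf_le summable_th_real summable_rk_exp norm_th_real) auto
  finally show ?thesis .
qed

lemma G_deriv:
  assumes "t > 0"
  shows "(G k has_vector_derivative G (Suc k) t) (at t)"
proof -
  define \<delta> where "\<delta> = t / 2"
  have \<delta>: "\<delta> > 0" "\<delta> < t" using assms by (auto simp: \<delta>_def)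
  define c where "c = \<beta>0 * \<delta> / 2"
  have c: "c > 0" using \<delta> beta0_pos by (simp add: c_def)
  define S where "S = {w. Re w > \<delta>} \<inter> {w. Im w < c} \<inter> {w. Im w > - c}"
  have cvx: "convex S" unfolding S_def
    by (intro convex_Int convex_halfspace_Re_gt convex_halfspace_Im_lt convex_halfspace_Im_gt)
  have opn: "open S" unfolding S_def
    by (intro open_Int open_halfspace_Re_gt open_halfspace_Im_lt open_halfspace_Im_gt)
  have bound: "norm (th j n w) \<le> norm (lam n) ^ j * exp (- c * norm (lam n))" if w: "w \<in> S" for j n w
  proof -
    have "Re (lam n) * Re w \<ge> \<beta>0 * norm (lam n) * \<delta>"
      using w Re_ge[of n] \<delta> beta0_pos r_pos[of n] Re_pos[of n] unfolding S_def
      by (intro mult_mono) auto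
    moreover have "\<bar>Im (lam n) * Im w\<bar> \<le> norm (lam n) * c"
      unfolding abs_mult using w c unfolding S_def
      by (intro mult_mono abs_Im_le_cmod) auto
    ultimately have "Re (lam n * w) \<ge> c * norm (lam n)"
      unfolding c_def by (simp add: algebra_simps)
    then have "exp (- Re (lam n * w)) \<le> exp (- c * norm (lam n))" by simp
    then show ?thesis
      by (simp add: th_def norm_mult norm_power norm_exp_eq_Re mult_left_mono)
  qed
  have der: "(th k n has_field_derivative th (Suc k) n w) (at w within S)" for n w
    unfolding th_def by (auto intro!: derivative_eq_intros)
  have unif: "uniformly_convergent_on S (\<lambda>N w. \<Sum>i<N. th (Suc k) i w)"
    by (rule Weierstrass_m_test'[OF bound summable_rk_exp[OF c]])
  have x0: "complex_of_real t \<in> S" using \<delta> c unfolding S_def by auto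
  have sx0: "summable (\<lambda>n. th k n (complex_of_real t))"
    using summable_th_real[OF assms] by (rule summable_norm_cancel)
  have "((\<lambda>w. \<Sum>n. th k n w) has_field_derivative (\<Sum>n. th (Suc k) n (complex_of_real t))) (at (complex_of_real t))"
    by (rule has_field_derivative_series'(2)[OF cvx der unif x0 sx0]) (simp add: interior_open[OF opn] x0)
  then have "((\<lambda>x. \<Sum>n. th k n (complex_of_real x)) has_vector_derivative (\<Sum>n. th (Suc k) n (complex_of_real t))) (at t)"
    by (rule has_vector_derivative_real_field)
  then show ?thesis unfolding G_def .
qed

lemma vderiv_G:
  fixes \<Theta> :: "real \<Rightarrow> complex"
  assumes "\<And>t. t > 0 \<Longrightarrow> \<Theta> t = G 0 t"
  shows "t > 0 \<Longrightarrow> vderiv_iter k \<Theta> t = G k t"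
proof (induction k arbitrary: t)
  case 0 then show ?case using assms by (simp add: vderiv_iter_def)
next
  case (Suc k)
  have "(vderiv_iter k \<Theta> has_vector_derivative G (Suc k) t) (at t)"
    by (rule has_vector_derivative_transform_within_open[OF G_deriv[OF Suc.prems] open_greaterThan[of 0]])
       (use Suc in auto)
  then have "vector_derivative (vderiv_iter k \<Theta>) (at t) = G (Suc k) t"
    by (rule vector_derivative_at)
  then show ?case by (simp add: vderiv_iter_def)
qed

end

context lamsys
begin

lemma G_bigo_0:
  assumes \<alpha>: "\<alpha> > 0" and S: "summable (\<lambda>n. norm (lam n) powr (- \<alpha>))"
  shows "(\<lambda>t. norm (G k t)) \<in> O[at_right 0](\<lambda>t. t powr (- \<alpha> - real k))"
proof -
  obtain C where C: "C > 0" "\<And>u. u \<ge> 0 \<Longrightarrow> u powr (\<alpha> + real k) * exp (- \<beta>0 * u) \<le> C"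
    using powr_exp_bound[OF beta0_pos, of "\<alpha> + real k"] \<alpha> by auto
  define SS where "SS = (\<Sum>n. norm (lam n) powr (- \<alpha>))"
  have "norm (norm (G k t)) \<le> (SS * C) * norm (t powr (- \<alpha> - real k))" if t: "t > 0" for t
  proof -
    have trm: "norm (lam n) ^ k * exp (- (\<beta>0 * t) * norm (lam n)) \<le> norm (lam n) powr (- \<alpha>) * (C * t powr (- \<alpha> - real k))" for n
    proof -
      define r where "r = norm (lam n)"
      have r: "r > 0" unfolding r_def by (rule r_pos)
      have e1: "r ^ k = r powr (- \<alpha>) * (r * t) powr (\<alpha> + real k) * t powr (- \<alpha> - real k)"
        using r t by (simp add: powr_mult powr_realpow[symmetric] powr_add[symmetric] powr_diff)
             (simp add: powr_add powr_minus field_simps)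
      have "r ^ k * exp (- (\<beta>0 * t) * r) = r powr (- \<alpha>) * t powr (- \<alpha> - real k) * ((r * t) powr (\<alpha> + real k) * exp (- \<beta>0 * (r * t)))"
        unfolding e1 by (simp add: mult_ac)
      also have "\<dots> \<le> r powr (- \<alpha>) * t powr (- \<alpha> - real k) * C"
        using C(2)[of "r * t"] r t by (intro mult_left_mono) auto
      finally show ?thesis unfolding r_def by (simp add: mult_ac)
    qed
    have "norm (norm (G k t)) = norm (G k t)" by simp
    also have "\<dots> \<le> (\<Sum>n. norm (lam n) ^ k * exp (- (\<beta>0 * t) * norm (lam n)))"
      by (rule norm_G_le[OF t])
    also have "\<dots> \<le> (\<Sum>n. norm (lam n) powr (- \<alpha>) * (C * t powr (- \<alpha> - real k)))"
      using t beta0_pos by (intro suminf_le trm summable_rk_exp summable_mult2 S) auto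
    also have "\<dots> = SS * (C * t powr (- \<alpha> - real k))"
      unfolding SS_def by (rule suminf_mult2[symmetric, OF S])
    finally show ?thesis using t by (simp add: mult_ac)
  qed
  then show ?thesis
    by (intro bigoI[where c = "SS * C"]) (auto intro: eventually_mono[OF eventually_at_right_less])
qed

lemma G_bigo_inf:
  assumes \<beta>: "\<beta> > 0" "\<And>n. \<beta> < \<beta>0 * norm (lam n)"
  shows "(\<lambda>t. norm (G k t)) \<in> O[at_top](\<lambda>t. exp (- \<beta> * t))"
proof -
  define SS where "SS = (\<Sum>n. norm (lam n) ^ k * exp (- \<beta>0 * norm (lam n)))"
  have S: "summable (\<lambda>n. norm (lam n) ^ k * exp (- \<beta>0 * norm (lam n)))"
    by (rule summable_rk_exp[OF beta0_pos])
  have "norm (norm (G k t)) \<le> (exp \<beta> * SS) * norm (exp (- \<beta> * t))" if t: "t \<ge> 1" for t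
  proof -
    have trm: "norm (lam n) ^ k * exp (- (\<beta>0 * t) * norm (lam n)) \<le> norm (lam n) ^ k * exp (- \<beta>0 * norm (lam n)) * (exp \<beta> * exp (- \<beta> * t))" for n
    proof -
      have "(\<beta>0 * norm (lam n) - \<beta>) * 1 \<le> (\<beta>0 * norm (lam n) - \<beta>) * t"
        using \<beta>(2)[of n] t by (intro mult_left_mono) auto
      then have "- (\<beta>0 * t) * norm (lam n) \<le> - \<beta>0 * norm (lam n) + \<beta> + - \<beta> * t"
        by (simp add: algebra_simps)
      then have "exp (- (\<beta>0 * t) * norm (lam n)) \<le> exp (- \<beta>0 * norm (lam n)) * (exp \<beta> * exp (- \<beta> * t))"
        by (simp add: exp_add[symmetric])
      then show ?thesis by (simp add: mult_left_mono mult.assoc)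
    qed
    have "norm (norm (G k t)) = norm (G k t)" by simp
    also have "\<dots> \<le> (\<Sum>n. norm (lam n) ^ k * exp (- (\<beta>0 * t) * norm (lam n)))"
      using t by (intro norm_G_le) auto
    also have "\<dots> \<le> (\<Sum>n. norm (lam n) ^ k * exp (- \<beta>0 * norm (lam n)) * (exp \<beta> * exp (- \<beta> * t)))"
      using t beta0_pos by (intro suminf_le trm summable_rk_exp summable_mult2 S) auto
    also have "\<dots> = SS * (exp \<beta> * exp (- \<beta> * t))"
      unfolding SS_def by (rule suminf_mult2[symmetric, OF S])
    finally show ?thesis by (simp add: mult_ac)
  qed
  then show ?thesis
    by (intro bigoI[where c = "exp \<beta> * SS"]) (auto intro: eventually_mono[OF eventually_ge_at_top[of 1]])
qed

end

context lamsys
begin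

lemma G_cont: "continuous_on {0<..} (G k)"
proof (intro continuous_at_imp_continuous_on ballI)
  fix x :: real assume "x \<in> {0<..}"
  then show "isCont (G k) x"
    using has_vector_derivative_continuous[OF G_deriv[of x k]] by simp
qed

lemma integral_part:
  fixes \<Theta> :: "real \<Rightarrow> complex" and x :: real
  assumes \<Theta>: "\<And>t. t > 0 \<Longrightarrow> \<Theta> t = G 0 t" and x: "x \<ge> 0"
  shows "set_integrable lborel {0<..} (\<lambda>t. t ^ k * exp (- x * t) * norm (\<Theta> t))"
    and "(LINT t:{0<..}|lborel. t ^ k * exp (- x * t) * norm (\<Theta> t))
            \<le> fact k / \<beta>0 ^ (k + 1) * (\<Sum>n. 1 / norm (lam n) ^ (k + 1))"
    and "set_integrable lborel {0<..} (\<lambda>t. complex_of_real (exp (- x * t) * t ^ k) * \<Theta> t)"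
    and "(\<lambda>n. complex_of_real (fact k) / (complex_of_real x + lam n) ^ (k + 1)) sums
           (LINT t:{0<..}|lborel. complex_of_real (exp (- x * t) * t ^ k) * \<Theta> t)"
proof -
  define g where "g i t = indicator {0<..} t *\<^sub>R (t ^ k * exp (- (x + Re (lam i)) * t))" for i t
  define h where "h i t = indicator {0<..} t *\<^sub>R (complex_of_real t ^ k * exp (- ((complex_of_real x + lam i) * complex_of_real t)))" for i t
  have cpos: "x + Re (lam i) > 0" for i using x Re_pos[of i] by simp
  have g_int: "integrable lborel (g i)" for i
    using laplace_real(1)[OF cpos[of i], of k] unfolding g_def set_integrable_def .
  have g_val: "integral\<^sup>L lborel (g i) = fact k / (x + Re (lam i)) ^ (k + 1)" for i
    using laplace_real(2)[OF cpos[of i], of k] unfolding g_def set_lebesgue_integral_def .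
  have g_nn: "g i t \<ge> 0" for i t by (simp add: g_def split: split_indicator)
  have normh: "norm (h i t) = g i t" for i t
  proof (cases "t > 0")
    case True
    have "Re (complex_of_real x + lam i) = x + Re (lam i)" by simp
    then show ?thesis using True unfolding h_def g_def
      by (simp add: norm_lap_term[of t k "complex_of_real x + lam i", OF less_imp_le[OF True]])
  qed (simp add: h_def g_def)
  have h_int: "integrable lborel (h i)" for i
    using laplace_complex(1)[of "complex_of_real x + lam i" k] cpos[of i] unfolding h_def set_integrable_def by simp
  have h_val: "integral\<^sup>L lborel (h i) = fact k / (complex_of_real x + lam i) ^ (k + 1)" for i
    using laplace_complex(2)[of "complex_of_real x + lam i" k] cpos[of i] unfolding h_def set_lebesgue_integral_def by simp
  have bnd: "fact k / (x + Re (lam i)) ^ (k + 1) \<le> fact k / \<beta>0 ^ (k + 1) * (1 / norm (lam i) ^ (k + 1))" for i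
  proof -
    have "(\<beta>0 * norm (lam i)) ^ (k + 1) \<le> (x + Re (lam i)) ^ (k + 1)"
      using Re_ge[of i] x beta0_pos r_pos[of i] by (intro power_mono) auto
    moreover have "(\<beta>0 * norm (lam i)) ^ (k + 1) > 0" using beta0_pos r_pos[of i] by simp
    ultimately have "fact k / (x + Re (lam i)) ^ (k + 1) \<le> fact k / (\<beta>0 * norm (lam i)) ^ (k + 1)"
      by (intro divide_left_mono) auto
    also have "\<dots> = fact k / \<beta>0 ^ (k + 1) * (1 / norm (lam i) ^ (k + 1))"
      by (simp add: power_mult_distrib)
    finally show ?thesis .
  qed
  have sum_bnd: "summable (\<lambda>i. fact k / \<beta>0 ^ (k + 1) * (1 / norm (lam i) ^ (k + 1)))"
    by (intro summable_mult summable_pow)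
  have sum_gval: "summable (\<lambda>i. fact k / (x + Re (lam i)) ^ (k + 1))"
  proof (rule summable_comparison_test[OF _ sum_bnd], intro exI allI impI)
    fix i :: nat
    have "fact k / (x + Re (lam i)) ^ (k + 1) \<ge> 0" using cpos[of i] by simp
    then show "norm (fact k / (x + Re (lam i)) ^ (k + 1)) \<le> fact k / \<beta>0 ^ (k + 1) * (1 / norm (lam i) ^ (k + 1))"
      using bnd[of i] by (simp only: real_norm_def abs_of_nonneg)
  qed
  have g_summ: "summable (\<lambda>i. g i t)" for t
  proof (cases "t > 0")
    case True
    have "summable (\<lambda>i. t ^ k * (norm (lam i) ^ 0 * exp (- (\<beta>0 * t) * norm (lam i))))"
      using True beta0_pos by (intro summable_mult summable_rk_exp) auto
    then show ?thesis
    proof (rule summable_comparison_test[rotated], intro exI allI impI)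
      fix i :: nat
      have "exp (- (x + Re (lam i)) * t) \<le> exp (- (\<beta>0 * t) * norm (lam i))"
      proof -
        have "\<beta>0 * norm (lam i) * t \<le> Re (lam i) * t" using mult_right_mono[OF Re_ge[of i], of t] True by simp
        moreover have "0 \<le> x * t" using True x by simp
        ultimately have "- (x + Re (lam i)) * t \<le> - (\<beta>0 * t) * norm (lam i)" by (simp add: algebra_simps)
        then show ?thesis by simp
      qed
      then show "norm (g i t) \<le> t ^ k * (norm (lam i) ^ 0 * exp (- (\<beta>0 * t) * norm (lam i)))"
        using True by (simp add: g_def mult_left_mono)
    qed
  qed (simp add: g_def)
  have AEs: "AE t in lborel. summable (\<lambda>i. norm (g i t))" using g_summ g_nn by simp
  have AEsh: "AE t in lborel. summable (\<lambda>i. norm (h i t))" using g_summ normh by simp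
  have s_int: "summable (\<lambda>i. \<integral>t. norm (g i t) \<partial>lborel)"
    using sum_gval g_nn g_val by simp
  have s_inth: "summable (\<lambda>i. \<integral>t. norm (h i t) \<partial>lborel)"
    using sum_gval g_nn g_val normh by simp
  note GS = integrable_suminf[OF g_int AEs s_int] integral_suminf[OF g_int AEs s_int]
  note HS = integrable_suminf[OF h_int AEsh s_inth] sums_integral[OF h_int AEsh s_inth]
  have \<Theta>norm: "norm (\<Theta> t) \<le> (\<Sum>i. exp (- Re (lam i) * t))" if t: "t > 0" for t
  proof -
    have "norm (\<Theta> t) = norm (\<Sum>i. th 0 i (complex_of_real t))" using \<Theta>[OF t] by (simp add: G_def)
    also have "\<dots> \<le> (\<Sum>i. norm (th 0 i (complex_of_real t)))"
      by (rule summable_norm[OF summable_th_real[OF t]])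
    also have "\<dots> = (\<Sum>i. exp (- Re (lam i) * t))"
      by (simp add: th_def norm_exp_eq_Re)
    finally show ?thesis .
  qed
  define F where "F t = indicator {0<..} t *\<^sub>R (t ^ k * exp (- x * t) * norm (\<Theta> t))" for t
  have F_meas: "F \<in> borel_measurable lborel"
  proof -
    have "continuous_on {0<..} (\<lambda>t. t ^ k * exp (- x * t) * norm (G 0 t))"
      by (intro continuous_intros continuous_on_norm G_cont)
    then have "continuous_on {0<..} (\<lambda>t. t ^ k * exp (- x * t) * norm (\<Theta> t))"
      by (rule continuous_on_cong[THEN iffD1, rotated 2]) (auto simp: \<Theta>)
    then show ?thesis unfolding F_def measurable_lborel2
      by (intro borel_measurable_continuous_on_indicator) auto
  qed
  have F_le: "norm (F t) \<le> norm (\<Sum>i. g i t)" for t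
  proof (cases "t > 0")
    case True
    have "norm (F t) = t ^ k * exp (- x * t) * norm (\<Theta> t)" using True by (simp add: F_def)
    also have "\<dots> \<le> t ^ k * exp (- x * t) * (\<Sum>i. exp (- Re (lam i) * t))"
      using True \<Theta>norm[OF True] by (intro mult_left_mono) auto
    also have "\<dots> = (\<Sum>i. t ^ k * exp (- x * t) * exp (- Re (lam i) * t))"
      by (rule suminf_mult[symmetric]) (use summable_th_real[OF True, of 0] in \<open>simp add: th_def norm_exp_eq_Re\<close>)
    also have "\<dots> = (\<Sum>i. g i t)"
      using True by (simp add: g_def exp_add[symmetric] algebra_simps)
    also have "\<dots> \<le> norm (\<Sum>i. g i t)" by simp
    finally show ?thesis .
  qed (simp add: F_def)
  have F_int: "integrable lborel F"
    by (rule Bochner_Integration.integrable_bound[OF GS(1) F_meas]) (use F_le in auto)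
  then show I1: "set_integrable lborel {0<..} (\<lambda>t. t ^ k * exp (- x * t) * norm (\<Theta> t))"
    unfolding set_integrable_def F_def .
  have "(LINT t:{0<..}|lborel. t ^ k * exp (- x * t) * norm (\<Theta> t)) = integral\<^sup>L lborel F"
    unfolding set_lebesgue_integral_def F_def ..
  also have "\<dots> \<le> integral\<^sup>L lborel (\<lambda>t. \<Sum>i. g i t)"
  proof (rule integral_mono[OF F_int GS(1)])
    fix t :: real
    show "F t \<le> (\<Sum>i. g i t)"
      using F_le[of t] suminf_nonneg[OF g_summ g_nn] by (simp add: F_def)
  qed
  also have "\<dots> = (\<Sum>i. fact k / (x + Re (lam i)) ^ (k + 1))"
    using GS(2) g_val by simp
  also have "\<dots> \<le> (\<Sum>i. fact k / \<beta>0 ^ (k + 1) * (1 / norm (lam i) ^ (k + 1)))"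
    by (intro suminf_le bnd sum_gval sum_bnd)
  also have "\<dots> = fact k / \<beta>0 ^ (k + 1) * (\<Sum>n. 1 / norm (lam n) ^ (k + 1))"
    using suminf_mult[OF summable_pow[of k], of "fact k / \<beta>0 ^ (k + 1)"] by simp
  finally show "(LINT t:{0<..}|lborel. t ^ k * exp (- x * t) * norm (\<Theta> t))
            \<le> fact k / \<beta>0 ^ (k + 1) * (\<Sum>n. 1 / norm (lam n) ^ (k + 1))" .
  have Hsum: "(\<Sum>i. h i t) = indicator {0<..} t *\<^sub>R (complex_of_real (exp (- x * t) * t ^ k) * \<Theta> t)" for t
  proof (cases "t > 0")
    case True
    have "complex_of_real (exp (- x * t) * t ^ k) * \<Theta> t
        = complex_of_real (exp (- x * t) * t ^ k) * (\<Sum>i. exp (- (lam i * complex_of_real t)))"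
      using \<Theta>[OF True] by (simp add: G_def th_def)
    also have "\<dots> = (\<Sum>i. complex_of_real (exp (- x * t) * t ^ k) * exp (- (lam i * complex_of_real t)))"
      by (rule suminf_mult[symmetric]) (use summable_norm_cancel[OF summable_th_real[OF True, of 0]] in \<open>simp add: th_def\<close>)
    also have "\<dots> = (\<Sum>i. h i t)"
    proof (rule suminf_cong)
      fix i
      have "exp (- ((complex_of_real x + lam i) * complex_of_real t)) = complex_of_real (exp (- x * t)) * exp (- (lam i * complex_of_real t))"
        by (simp add: exp_add[symmetric] algebra_simps flip: exp_of_real)
      then show "complex_of_real (exp (- x * t) * t ^ k) * exp (- (lam i * complex_of_real t)) = h i t"
        using True by (simp add: h_def)
    qed
    finally show ?thesis using True by simp
  qed (simp add: h_def)
  have "integrable lborel (\<lambda>t. indicator {0<..} t *\<^sub>R (complex_of_real (exp (- x * t) * t ^ k) * \<Theta> t))"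
    using HS(1) unfolding Hsum .
  then show "set_integrable lborel {0<..} (\<lambda>t. complex_of_real (exp (- x * t) * t ^ k) * \<Theta> t)"
    unfolding set_integrable_def .
  show "(\<lambda>n. complex_of_real (fact k) / (complex_of_real x + lam n) ^ (k + 1)) sums
           (LINT t:{0<..}|lborel. complex_of_real (exp (- x * t) * t ^ k) * \<Theta> t)"
    using HS(2) unfolding Hsum h_val set_lebesgue_integral_def by simp
qed

end

locale fsys = lamsys +
  fixes f :: "complex \<Rightarrow> complex" and a :: "nat \<Rightarrow> real"
  assumes f_series: "\<And>z. (\<lambda>n. complex_of_real (a n) * z ^ n) sums f z"
    and coeff_pos: "\<And>n. a 0 * a n > 0"
    and product: "\<And>z. (\<lambda>n. 1 + z / lam n) has_prod (f z / f 0)"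
begin

lemma f0: "f 0 = complex_of_real (a 0)" "f 0 \<noteq> 0"
proof -
  show "f 0 = complex_of_real (a 0)"
    using f_series[of 0] powser_sums_zero_iff by (metis sums_unique2 powser_sums_zero)
  moreover have "a 0 \<noteq> 0" using coeff_pos[of 0] by auto
  ultimately show "f 0 \<noteq> 0" by simp
qed

definition cc :: real where "cc = \<beta>0 * (SOME m. m > 0 \<and> (\<forall>n. m \<le> norm (lam n))) / 2"
definition DD :: "complex set" where "DD = {z. Re z > - cc}"

lemma cc: "cc > 0" "\<And>n. cc \<le> \<beta>0 * norm (lam n) / 2"
proof -
  define m where "m = (SOME m. m > 0 \<and> (\<forall>n. m \<le> norm (lam n)))"
  have m: "m > 0 \<and> (\<forall>n. m \<le> norm (lam n))" unfolding m_def using r_lower by (rule someI_ex)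
  show "cc > 0" using m beta0_pos unfolding cc_def m_def[symmetric] by simp
  show "cc \<le> \<beta>0 * norm (lam n) / 2" for n
    using m beta0_pos unfolding cc_def m_def[symmetric] by (simp add: mult_left_mono)
qed

lemma DD: "open DD" "convex DD" "0 \<in> DD"
  unfolding DD_def using cc by (auto intro: open_halfspace_Re_gt convex_halfspace_Re_gt)

lemma real_in_DD: "x \<ge> 0 \<Longrightarrow> complex_of_real x \<in> DD"
  unfolding DD_def using cc by auto

lemma Re_shift: "z \<in> DD \<Longrightarrow> Re (z + lam n) \<ge> \<beta>0 * norm (lam n) / 2"
  using Re_ge[of n] cc(2)[of n] unfolding DD_def by auto

lemma norm_shift: "z \<in> DD \<Longrightarrow> norm (z + lam n) \<ge> \<beta>0 * norm (lam n) / 2"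
  using Re_shift[of z n] complex_Re_le_cmod[of "z + lam n"] by linarith

lemma shift_nz: "z \<in> DD \<Longrightarrow> z + lam n \<noteq> 0"
proof
  assume "z \<in> DD" "z + lam n = 0"
  then have "\<beta>0 * norm (lam n) / 2 \<le> 0" using Re_shift[of z n] by simp
  moreover have "\<beta>0 * norm (lam n) > 0" by (rule mult_pos_pos[OF beta0_pos r_pos])
  ultimately show False by linarith
qed

definition q :: "nat \<Rightarrow> nat \<Rightarrow> complex \<Rightarrow> complex" where
  "q j n z = (-1) ^ j * fact j / (z + lam n) ^ (j + 1)"

definition Q :: "nat \<Rightarrow> complex \<Rightarrow> complex" where
  "Q j z = (\<Sum>n. q j n z)"

lemma q_bound: "z \<in> DD \<Longrightarrow> norm (q j n z) \<le> fact j * (2 / \<beta>0) ^ (j + 1) * (1 / norm (lam n) ^ (j + 1))"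
proof -
  assume z: "z \<in> DD"
  have pos: "\<beta>0 * norm (lam n) / 2 > 0" using beta0_pos r_pos[of n] by simp
  have "(\<beta>0 * norm (lam n) / 2) ^ (j + 1) \<le> norm (z + lam n) ^ (j + 1)"
    using norm_shift[OF z, of n] pos by (intro power_mono) auto
  moreover have "0 < (\<beta>0 * norm (lam n) / 2) ^ (j + 1)" using pos by simp
  ultimately have "0 < norm (z + lam n) ^ (j + 1)" by (meson order_less_le_trans)
  then have "0 < norm (z + lam n) ^ (j + 1) * (\<beta>0 * norm (lam n) / 2) ^ (j + 1)"
    using \<open>0 < (\<beta>0 * norm (lam n) / 2) ^ (j + 1)\<close> by (rule mult_pos_pos)
  then have "fact j / norm (z + lam n) ^ (j + 1) \<le> fact j / (\<beta>0 * norm (lam n) / 2) ^ (j + 1)"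
    using \<open>(\<beta>0 * norm (lam n) / 2) ^ (j + 1) \<le> norm (z + lam n) ^ (j + 1)\<close>
    by (intro divide_left_mono) auto
  also have "\<dots> = fact j * (2 / \<beta>0) ^ (j + 1) * (1 / norm (lam n) ^ (j + 1))"
    by (simp add: power_mult_distrib power_divide field_simps)
  finally show ?thesis by (simp add: q_def norm_divide norm_mult norm_power)
qed

lemma q_summable_bound: "summable (\<lambda>n. fact j * (2 / \<beta>0) ^ (j + 1) * (1 / norm (lam n) ^ (j + 1)))"
  by (intro summable_mult summable_pow)

lemma inv_pow_aux: "(w::complex) \<noteq> 0 \<Longrightarrow> (-1) ^ j * fact j * (- (inverse (w ^ Suc j) * (of_nat (Suc j) * w ^ j) * inverse (w ^ Suc j)))
   = (-1) ^ Suc j * fact (Suc j) / w ^ (Suc j + 1)"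
proof -
  assume w: "w \<noteq> 0"
  have wj: "w ^ j \<noteq> 0" using w by simp
  have "inverse (w ^ Suc j) * (of_nat (Suc j) * w ^ j) * inverse (w ^ Suc j) = of_nat (Suc j) / w ^ (Suc j + 1)"
    using w wj by (simp add: divide_simps)
  then show ?thesis by (simp add: divide_simps)
qed

lemma q_deriv: "z \<in> DD \<Longrightarrow> (q j n has_field_derivative q (Suc j) n z) (at z)"
proof -
  assume z: "z \<in> DD"
  have nz: "z + lam n \<noteq> 0" by (rule shift_nz[OF z])
  have d1: "((\<lambda>z. (z + lam n) ^ Suc j) has_field_derivative of_nat (Suc j) * (z + lam n) ^ j) (at z)"
    by (rule DERIV_cong[OF DERIV_power[OF DERIV_add[OF DERIV_ident DERIV_const]]]) simp
  have d2: "((\<lambda>z. inverse ((z + lam n) ^ Suc j)) has_field_derivative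
      - (inverse ((z + lam n) ^ Suc j) * (of_nat (Suc j) * (z + lam n) ^ j) * inverse ((z + lam n) ^ Suc j))) (at z)"
    by (rule DERIV_inverse'[OF d1]) (use nz in simp)
  note d3 = DERIV_cmult[OF d2, of "(-1) ^ j * fact j"]
  have eq: "(-1) ^ j * fact j * (- (inverse ((z + lam n) ^ Suc j) * (of_nat (Suc j) * (z + lam n) ^ j) * inverse ((z + lam n) ^ Suc j)))
      = q (Suc j) n z"
    unfolding q_def by (rule inv_pow_aux[OF nz])
  have e2: "q j n = (\<lambda>z. (-1) ^ j * fact j * inverse ((z + lam n) ^ Suc j))"
    by (rule ext) (simp add: q_def divide_inverse)
  show ?thesis unfolding e2 using d3 eq by simp
qed


lemma Q_deriv: "z \<in> DD \<Longrightarrow> (Q j has_field_derivative Q (Suc j) z) (at z)"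
proof -
  assume z: "z \<in> DD"
  have unif: "uniformly_convergent_on DD (\<lambda>N w. \<Sum>i<N. q (Suc j) i w)"
    by (rule Weierstrass_m_test'[OF q_bound q_summable_bound])
  have s0: "summable (\<lambda>n. q j n 0)"
    by (rule summable_comparison_test[OF _ q_summable_bound[of j]]) (use q_bound DD(3) in auto)
  have der: "\<And>n x. x \<in> DD \<Longrightarrow> (q j n has_field_derivative q (Suc j) n x) (at x within DD)"
    using q_deriv has_field_derivative_at_within by blast
  have zi: "z \<in> interior DD" using z by (simp add: interior_open[OF DD(1)])
  have "((\<lambda>w. \<Sum>n. q j n w) has_field_derivative (\<Sum>n. q (Suc j) n z)) (at z)"
    using has_field_derivative_series'(2)[OF DD(2) der unif DD(3) s0 zi] .
  then show ?thesis unfolding Q_def .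
qed

lemma deriv_iter_Q: "z \<in> DD \<Longrightarrow> (deriv ^^ j) (Q 0) z = Q j z"
proof (induction j arbitrary: z)
  case 0 then show ?case by simp
next
  case (Suc j)
  have "(deriv ^^ Suc j) (Q 0) z = deriv ((deriv ^^ j) (Q 0)) z" by simp
  also have "\<dots> = deriv (Q j) z"
    by (rule deriv_cong_ev[OF _ refl])
       (use eventually_nhds_in_open[OF DD(1) Suc.prems] in \<open>auto elim!: eventually_mono intro: Suc.IH\<close>)
  also have "\<dots> = Q (Suc j) z" by (rule DERIV_imp_deriv[OF Q_deriv[OF Suc.prems]])
  finally show ?case .
qed

lemma deriv_iter_cong:
  assumes "open S" "\<And>z. z \<in> S \<Longrightarrow> F z = H z"
  shows "z \<in> S \<Longrightarrow> (deriv ^^ j) F z = (deriv ^^ j) H z"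
proof (induction j arbitrary: z)
  case 0 then show ?case using assms by simp
next
  case (Suc j)
  show ?case
    by (simp, rule deriv_cong_ev[OF _ refl])
       (use eventually_nhds_in_open[OF assms(1) Suc.prems] in \<open>auto elim!: eventually_mono intro: Suc.IH\<close>)
qed

definition lf :: "nat \<Rightarrow> complex \<Rightarrow> complex" where
  "lf n z = Ln ((z + lam n) / lam n)"

lemma ratio_notin: "z \<in> DD \<Longrightarrow> (z + lam n) / lam n \<notin> \<real>\<^sub>\<le>\<^sub>0"
proof
  assume z: "z \<in> DD" and "(z + lam n) / lam n \<in> \<real>\<^sub>\<le>\<^sub>0"
  then obtain s where s: "s \<le> 0" "(z + lam n) / lam n = complex_of_real s"
    by (auto elim!: nonpos_Reals_cases)
  have ln: "lam n \<noteq> 0" using r_pos[of n] by auto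
  have "z + lam n = complex_of_real s * lam n" using s(2) ln by (simp add: field_simps)
  then have "Re (z + lam n) = s * Re (lam n)" by simp
  also have "\<dots> \<le> 0" using s(1) Re_pos[of n] by (simp add: mult_nonpos_nonneg)
  finally show False using Re_shift[OF z, of n] mult_pos_pos[OF beta0_pos r_pos[of n]] by linarith
qed

lemma lf_deriv: "z \<in> DD \<Longrightarrow> (lf n has_field_derivative q 0 n z) (at z)"
proof -
  assume z: "z \<in> DD"
  have ln: "lam n \<noteq> 0" using r_pos[of n] by auto
  have nz: "z + lam n \<noteq> 0" by (rule shift_nz[OF z])
  have dg0: "((\<lambda>z. (z + lam n) / lam n) has_field_derivative (1 + 0) / lam n) (at z)"
    by (intro DERIV_cdivide DERIV_add DERIV_ident DERIV_const)
  have dg: "((\<lambda>z. (z + lam n) / lam n) has_field_derivative 1 / lam n) (at z)"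
    using dg0 by (simp only: add_0_right)
  have A: "((\<lambda>z. Ln ((z + lam n) / lam n)) has_field_derivative inverse ((z + lam n) / lam n) * (1 / lam n)) (at z)"
    by (rule DERIV_chain2[OF has_field_derivative_Ln[OF ratio_notin[OF z, of n]] dg])
  have B: "inverse ((z + lam n) / lam n) * (1 / lam n) = q 0 n z"
  proof -
    have "inverse ((z + lam n) / lam n) * (1 / lam n) = lam n / (z + lam n) * (1 / lam n)"
      by (simp only: inverse_divide)
    also have "\<dots> = 1 / (z + lam n)" using ln nz by (simp add: field_simps)
    also have "\<dots> = q 0 n z" by (simp add: q_def)
    finally show ?thesis .
  qed
  show ?thesis unfolding lf_def using DERIV_cong[OF A B] .
qed

definition LL :: "complex \<Rightarrow> complex" where "LL z = (\<Sum>n. lf n z)"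

lemma LL: assumes z: "z \<in> DD"
  shows "summable (\<lambda>n. lf n z)" "(LL has_field_derivative Q 0 z) (at z)"
proof -
  have unif: "uniformly_convergent_on DD (\<lambda>N w. \<Sum>i<N. q 0 i w)"
    by (rule Weierstrass_m_test'[OF q_bound q_summable_bound])
  have s0: "summable (\<lambda>n. lf n 0)" using r_pos by (simp add: lf_def)
  have der: "\<And>n x. x \<in> DD \<Longrightarrow> (lf n has_field_derivative q 0 n x) (at x within DD)"
    using lf_deriv has_field_derivative_at_within by blast
  have zi: "z \<in> interior DD" using z by (simp add: interior_open[OF DD(1)])
  note R = has_field_derivative_series'[OF DD(2) der unif DD(3) s0 zi]
  show "summable (\<lambda>n. lf n z)" by (rule R(1))
  show "(LL has_field_derivative Q 0 z) (at z)"
    unfolding LL_def Q_def by (rule R(2))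
qed

lemma f_exp: assumes z: "z \<in> DD" shows "f z = f 0 * exp (LL z)"
proof -
  have "(\<lambda>N. \<Sum>n<N. lf n z) \<longlonglongrightarrow> LL z"
    unfolding LL_def using LL(1)[OF z] by (rule summable_LIMSEQ)
  then have 1: "(\<lambda>N. exp (\<Sum>n<N. lf n z)) \<longlonglongrightarrow> exp (LL z)"
    by (rule tendsto_exp)
  have e: "exp (\<Sum>n<N. lf n z) = (\<Prod>n<N. 1 + z / lam n)" for N
  proof -
    have "exp (\<Sum>n<N. lf n z) = (\<Prod>n<N. exp (lf n z))" by (simp add: exp_sum)
    also have "\<dots> = (\<Prod>n<N. 1 + z / lam n)"
    proof (rule prod.cong[OF refl])
      fix n
      have ln: "lam n \<noteq> 0" using r_pos[of n] by auto
      have "(z + lam n) / lam n \<noteq> 0" using shift_nz[OF z, of n] ln by simp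
      then have "exp (lf n z) = (z + lam n) / lam n" unfolding lf_def by (rule exp_Ln)
      also have "\<dots> = 1 + z / lam n" using ln by (simp add: add_divide_distrib)
      finally show "exp (lf n z) = 1 + z / lam n" .
    qed
    finally show ?thesis .
  qed
  have 2: "(\<lambda>N. \<Prod>n<N. 1 + z / lam n) \<longlonglongrightarrow> f z / f 0"
    by (rule has_prod_imp_tendsto'[OF product])
  have "f z / f 0 = exp (LL z)" using LIMSEQ_unique[OF 2 1[unfolded e]] .
  then show ?thesis using f0(2) by (simp add: field_simps)
qed

lemma logderiv: assumes z: "z \<in> DD" shows "deriv f z / f z = Q 0 z"
proof -
  have "((\<lambda>w. f 0 * exp (LL w)) has_field_derivative f 0 * (exp (LL z) * Q 0 z)) (at z)"
    by (intro DERIV_cmult DERIV_chain2[OF DERIV_exp LL(2)[OF z]])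
  then have "(f has_field_derivative f 0 * (exp (LL z) * Q 0 z)) (at z)"
    by (rule has_field_derivative_transform_within_open[OF _ DD(1) z]) (rule sym, rule f_exp)
  then have "deriv f z = f 0 * (exp (LL z) * Q 0 z)" by (rule DERIV_imp_deriv)
  then show ?thesis using f_exp[OF z] f0(2) by simp
qed

lemma logderiv_part:
  assumes x: "x \<ge> 0"
  shows "(\<lambda>n. complex_of_real (fact k) / (complex_of_real x + lam n) ^ (k + 1))
            sums ((-1) ^ k * (deriv ^^ k) (\<lambda>z. deriv f z / f z) (complex_of_real x))"
proof -
  have xD: "complex_of_real x \<in> DD" by (rule real_in_DD[OF x])
  have "(deriv ^^ k) (\<lambda>z. deriv f z / f z) (complex_of_real x) = (deriv ^^ k) (Q 0) (complex_of_real x)"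
    by (rule deriv_iter_cong[OF DD(1) logderiv xD])
  also have "\<dots> = Q k (complex_of_real x)" by (rule deriv_iter_Q[OF xD])
  finally have eq: "(deriv ^^ k) (\<lambda>z. deriv f z / f z) (complex_of_real x) = Q k (complex_of_real x)" .
  have s: "summable (\<lambda>n. q k n (complex_of_real x))"
    by (rule summable_comparison_test[OF _ q_summable_bound[of k]]) (use q_bound xD in auto)
  have "(\<lambda>n. (-1) ^ k * q k n (complex_of_real x)) sums ((-1) ^ k * Q k (complex_of_real x))"
    unfolding Q_def by (rule sums_mult[OF summable_sums[OF s]])
  moreover have "(-1) ^ k * q k n (complex_of_real x) = complex_of_real (fact k) / (complex_of_real x + lam n) ^ (k + 1)" for n
    by (simp add: q_def)
  ultimately show ?thesis unfolding eq by simp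
qed

end

context fsys
begin

lemma a_nz: "a n \<noteq> 0" using coeff_pos[of n] by auto

lemma a_lim: "(\<lambda>n. \<bar>a n\<bar>) \<longlonglongrightarrow> 0"
proof -
  have "summable (\<lambda>n. complex_of_real (a n) * 1 ^ n)" using f_series[of 1] by (rule sums_summable)
  then have "(\<lambda>n. complex_of_real (a n)) \<longlonglongrightarrow> 0" using summable_LIMSEQ_zero by fastforce
  then have "(\<lambda>n. norm (complex_of_real (a n))) \<longlonglongrightarrow> 0" using tendsto_norm_zero by blast
  then show ?thesis by simp
qed

lemma ev_a_small: "eventually (\<lambda>n. \<bar>a n\<bar> < 1) sequentially"
  using a_lim by (rule order_tendstoD) simp

lemma order_nonneg: "coeff_order a \<ge> 0"
  unfolding coeff_order_def
proof (rule le_Limsup)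
  show "eventually (\<lambda>n. 0 \<le> ereal (real n * ln (real n) / - ln \<bar>a n\<bar>)) sequentially"
    using ev_a_small eventually_ge_at_top[of 1]
  proof eventually_elim
    case (elim n)
    have "ln \<bar>a n\<bar> < 0" using elim a_nz[of n] by simp
    moreover have "real n * ln (real n) \<ge> 0" using elim by simp
    ultimately show ?case by (simp add: divide_nonneg_neg)
  qed
qed simp

lemma coeff_bound:
  assumes \<sigma>: "\<sigma> > 0" "coeff_order a < ereal \<sigma>"
  shows "\<exists>N0\<ge>1. \<forall>n\<ge>N0. \<bar>a n\<bar> \<le> exp (- (real n * ln (real n)) / \<sigma>)"
proof -
  have "eventually (\<lambda>n. ereal (real n * ln (real n) / - ln \<bar>a n\<bar>) < ereal \<sigma>) sequentially"
    using assms(2) unfolding coeff_order_def by (rule Limsup_lessD)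
  then have "eventually (\<lambda>n. n \<ge> 1 \<and> \<bar>a n\<bar> \<le> exp (- (real n * ln (real n)) / \<sigma>)) sequentially"
    using ev_a_small eventually_ge_at_top[of 1]
  proof eventually_elim
    case (elim n)
    define L where "L = - ln \<bar>a n\<bar>"
    have L: "L > 0" using elim a_nz[of n] unfolding L_def by simp
    have "real n * ln (real n) / L < \<sigma>" using elim(1) unfolding L_def by simp
    then have "real n * ln (real n) < \<sigma> * L" using L by (simp add: field_simps)
    then have "- (real n * ln (real n)) / \<sigma> > - L" using \<sigma> by (simp add: field_simps)
    then have "exp (- L) \<le> exp (- (real n * ln (real n)) / \<sigma>)" by simp
    moreover have "exp (- L) = \<bar>a n\<bar>" unfolding L_def using a_nz[of n] by simp
    ultimately show ?case using elim by simp
  qed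
  then show ?thesis unfolding eventually_sequentially by blast
qed

end

lemma key_term_bound:
  fixes m R \<sigma> :: real
  assumes m: "m > 0" and R: "R \<ge> 1" and \<sigma>: "\<sigma> > 0"
  shows "exp (- (m * ln m) / \<sigma>) * R powr m \<le> exp (R powr \<sigma> / \<sigma> - m / \<sigma>)"
proof -
  have Rp: "R > 0" using R by simp
  have "ln (R powr \<sigma> / m) \<le> R powr \<sigma> / m - 1"
    using Rp m by (intro ln_le_minus_one) simp
  moreover have "ln (R powr \<sigma> / m) = \<sigma> * ln R - ln m"
    using Rp m by (simp add: ln_div ln_powr)
  ultimately have "\<sigma> * ln R - ln m \<le> R powr \<sigma> / m - 1" by simp
  then have "m * (\<sigma> * ln R - ln m) \<le> m * (R powr \<sigma> / m - 1)"
    using m by (intro mult_left_mono) auto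
  moreover have "m * (R powr \<sigma> / m - 1) = R powr \<sigma> - m" using m by (simp add: field_simps)
  ultimately have "m * (\<sigma> * ln R - ln m) \<le> R powr \<sigma> - m" by simp
  then have "(m * (\<sigma> * ln R - ln m)) / \<sigma> \<le> (R powr \<sigma> - m) / \<sigma>"
    using \<sigma> by (intro divide_right_mono) auto
  then have "- (m * ln m) / \<sigma> + m * ln R \<le> R powr \<sigma> / \<sigma> - m / \<sigma>"
    using \<sigma> by (simp add: field_simps)
  then have E: "exp (- (m * ln m) / \<sigma> + m * ln R) \<le> exp (R powr \<sigma> / \<sigma> - m / \<sigma>)"
    by (simp only: exp_le_cancel_iff)
  have e2: "exp (- (m * ln m) / \<sigma> + m * ln R) = exp (- (m * ln m) / \<sigma>) * exp (m * ln R)"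
    by (rule exp_add)
  have e1: "R powr m = exp (m * ln R)" using Rp by (simp add: powr_def mult.commute)
  show ?thesis unfolding e1 e2[symmetric] by (rule E)
qed

lemma ln_le_powr: "R \<ge> 1 \<Longrightarrow> \<sigma> > 0 \<Longrightarrow> ln R \<le> R powr \<sigma> / \<sigma>" for R \<sigma> :: real
proof -
  assume R: "R \<ge> 1" and \<sigma>: "\<sigma> > 0"
  have "ln (R powr \<sigma>) \<le> R powr \<sigma> - 1" by (rule ln_le_minus_one) (use R in simp)
  then have "\<sigma> * ln R \<le> R powr \<sigma>" using R by (simp add: ln_powr)
  then show ?thesis using \<sigma> by (simp add: field_simps)
qed

context fsys
begin

lemma f_growth:
  assumes \<sigma>: "\<sigma> > 0" and N0: "N0 \<ge> 1" and bnd: "\<And>n. n \<ge> N0 \<Longrightarrow> \<bar>a n\<bar> \<le> exp (- (real n * ln (real n)) / \<sigma>)"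
  shows "\<exists>C. \<forall>R\<ge>1. norm (f (complex_of_real R)) \<le> exp (C * R powr \<sigma>)"
proof -
  define A where "A = (\<Sum>n<N0. \<bar>a n\<bar>)"
  define q where "q = exp (- 1 / \<sigma>)"
  have q: "0 < q" "q < 1" using \<sigma> by (auto simp: q_def)
  define K where "K = 1 / (1 - q)"
  have K: "K > 0" using q by (simp add: K_def)
  have A: "A \<ge> 0" unfolding A_def by (intro sum_nonneg) auto
  define C where "C = ln (A + K + 1) + (real N0 + 1) / \<sigma>"
  show ?thesis
  proof (intro exI[of _ C] allI impI)
    fix R :: real assume R: "R \<ge> 1"
    have Rp: "R > 0" using R by simp
    define t where "t n = \<bar>a n\<bar> * R ^ n" for n
    have "summable (\<lambda>n. complex_of_real (a n) * complex_of_real (2 * R) ^ n)"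
      using f_series by (rule sums_summable)
    then have "summable (\<lambda>n. norm (complex_of_real (a n) * complex_of_real R ^ n))"
      by (rule powser_insidea) (use Rp in simp)
    moreover have "norm (complex_of_real (a n) * complex_of_real R ^ n) = t n" for n
      using Rp by (simp add: t_def norm_mult norm_power)
    ultimately have ts: "summable t" by simp
    have "norm (f (complex_of_real R)) = norm (\<Sum>n. complex_of_real (a n) * complex_of_real R ^ n)"
      using f_series[of "complex_of_real R"] by (simp add: sums_iff)
    also have "\<dots> \<le> (\<Sum>n. norm (complex_of_real (a n) * complex_of_real R ^ n))"
      by (rule summable_norm) (use ts \<open>\<And>n. norm (complex_of_real (a n) * complex_of_real R ^ n) = t n\<close> in simp)
    also have "\<dots> = suminf t"
      using \<open>\<And>n. norm (complex_of_real (a n) * complex_of_real R ^ n) = t n\<close> by simp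
    also have "\<dots> = (\<Sum>n. t (n + N0)) + (\<Sum>i<N0. t i)"
      by (rule suminf_split_initial_segment[OF ts])
    also have "\<dots> \<le> exp (R powr \<sigma> / \<sigma>) * K + A * R ^ N0"
    proof (rule add_mono)
      have tail: "t (n + N0) \<le> exp (R powr \<sigma> / \<sigma>) * q ^ n" for n
      proof -
        define m where "m = n + N0"
        have m1: "real m > 0" using N0 by (simp add: m_def)
        have "t m \<le> exp (- (real m * ln (real m)) / \<sigma>) * R ^ m"
          unfolding t_def using bnd[of m] Rp by (intro mult_right_mono) (auto simp: m_def)
        also have "\<dots> = exp (- (real m * ln (real m)) / \<sigma>) * R powr (real m)"
          using Rp by (simp add: powr_realpow)
        also have "\<dots> \<le> exp (R powr \<sigma> / \<sigma> - real m / \<sigma>)"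
          by (rule key_term_bound[OF m1 R \<sigma>])
        also have "\<dots> \<le> exp (R powr \<sigma> / \<sigma> - real n / \<sigma>)"
          using \<sigma> by (simp add: m_def divide_right_mono)
        also have "\<dots> = exp (R powr \<sigma> / \<sigma>) * q ^ n"
          unfolding q_def by (simp add: exp_diff exp_of_nat_mult[symmetric] exp_minus field_simps)
        finally show ?thesis unfolding m_def .
      qed
      have gs: "(\<lambda>n. exp (R powr \<sigma> / \<sigma>) * q ^ n) sums (exp (R powr \<sigma> / \<sigma>) * K)"
        unfolding K_def by (intro sums_mult geometric_sums) (use q in simp)
      show "(\<Sum>n. t (n + N0)) \<le> exp (R powr \<sigma> / \<sigma>) * K"
        using gs tail summable_ignore_initial_segment[OF ts, of N0]
        by (metis (no_types, lifting) sums_unique suminf_le sums_summable)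
      have "(\<Sum>i<N0. t i) \<le> (\<Sum>i<N0. \<bar>a i\<bar> * R ^ N0)"
        unfolding t_def using R by (intro sum_mono mult_left_mono power_increasing) auto
      also have "\<dots> = A * R ^ N0" unfolding A_def by (simp add: sum_distrib_right)
      finally show "(\<Sum>i<N0. t i) \<le> A * R ^ N0" .
    qed
    also have "\<dots> \<le> (A + K + 1) * exp ((real N0 + 1) * (R powr \<sigma> / \<sigma>))"
    proof -
      define M where "M = (real N0 + 1) * (R powr \<sigma> / \<sigma>)"
      have Rs: "R powr \<sigma> / \<sigma> \<ge> 0" using \<sigma> by simp
      have "1 * (R powr \<sigma> / \<sigma>) \<le> (real N0 + 1) * (R powr \<sigma> / \<sigma>)" using Rs by (intro mult_right_mono) auto
      then have "exp (R powr \<sigma> / \<sigma>) \<le> exp M" unfolding M_def by simp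
      moreover have "R ^ N0 \<le> exp M"
      proof -
        have "R ^ N0 = exp (real N0 * ln R)" using Rp by (simp add: exp_of_nat_mult)
        also have "\<dots> \<le> exp M"
        proof -
          have "real N0 * ln R \<le> real N0 * (R powr \<sigma> / \<sigma>)"
            using ln_le_powr[OF R \<sigma>] by (intro mult_left_mono) auto
          also have "\<dots> \<le> (real N0 + 1) * (R powr \<sigma> / \<sigma>)" using Rs by (intro mult_right_mono) auto
          finally show ?thesis unfolding M_def by simp
        qed
        finally show ?thesis .
      qed
      ultimately have "exp (R powr \<sigma> / \<sigma>) * K + A * R ^ N0 \<le> exp M * K + A * exp M"
        using K A by (intro add_mono mult_right_mono mult_left_mono) auto
      also have "\<dots> \<le> (A + K + 1) * exp M" by (simp add: algebra_simps)
      finally show ?thesis unfolding M_def .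
    qed
    also have "\<dots> = exp (ln (A + K + 1) + (real N0 + 1) * (R powr \<sigma> / \<sigma>))"
      using A K by (simp add: exp_add)
    also have "\<dots> \<le> exp (C * R powr \<sigma>)"
    proof -
      have "ln (A + K + 1) \<le> ln (A + K + 1) * R powr \<sigma>"
        using A K R \<sigma> by (intro mult_le_cancel_left1[THEN iffD2]) (auto simp: ge_one_powr_ge_zero)
      then show ?thesis unfolding C_def by (simp add: distrib_right)
    qed
    finally show "norm (f (complex_of_real R)) \<le> exp (C * R powr \<sigma>)" .
  qed
qed

end

lemma norm_one_plus_sq: "Re w \<ge> 0 \<Longrightarrow> 1 + norm w ^ 2 \<le> norm (1 + w) ^ 2"
proof -
  assume "Re w \<ge> 0"
  have "norm (1 + w) ^ 2 = (1 + Re w) ^ 2 + (Im w) ^ 2" by (simp add: cmod_power2)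
  also have "\<dots> = 1 + 2 * Re w + ((Re w) ^ 2 + (Im w) ^ 2)" by (simp add: power2_eq_square algebra_simps)
  also have "(Re w) ^ 2 + (Im w) ^ 2 = norm w ^ 2" by (simp add: cmod_power2)
  finally show ?thesis using \<open>Re w \<ge> 0\<close> by simp
qed

context fsys
begin

lemma finite_le: "finite {n. norm (lam n) \<le> R}"
proof -
  have "(\<lambda>n. 1 / norm (lam n)) \<longlonglongrightarrow> 0" using summable_LIMSEQ_zero[OF summable_inv] .
  then have "eventually (\<lambda>n. 1 / norm (lam n) < 1 / (\<bar>R\<bar> + 1)) sequentially"
    by (rule order_tendstoD) simp
  then obtain N where N: "\<And>n. n \<ge> N \<Longrightarrow> 1 / norm (lam n) < 1 / (\<bar>R\<bar> + 1)"
    unfolding eventually_sequentially by blast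
  have "{n. norm (lam n) \<le> R} \<subseteq> {..<N}"
  proof
    fix n assume n: "n \<in> {n. norm (lam n) \<le> R}"
    show "n \<in> {..<N}"
    proof (rule ccontr)
      assume "n \<notin> {..<N}"
      then have "1 / norm (lam n) < 1 / (\<bar>R\<bar> + 1)" using N by simp
      then have "\<bar>R\<bar> + 1 < norm (lam n)" using r_pos[of n] by (simp add: field_simps)
      then show False using n by simp
    qed
  qed
  then show ?thesis by (rule finite_subset) simp
qed

lemma count_bound:
  assumes R: "R > 0"
  shows "2 ^ card {n. norm (lam n) \<le> R} \<le> (norm (f (complex_of_real R)) / norm (f 0)) ^ 2"
proof -
  define F where "F = {n. norm (lam n) \<le> R}"
  define g where "g n = norm (1 + complex_of_real R / lam n) ^ 2" for n
  have ReP: "Re (complex_of_real R / lam n) \<ge> 0" for n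
    using R Re_pos[of n] by (simp add: Re_divide')
  have g1: "g n \<ge> 1" for n
    using norm_one_plus_sq[OF ReP[of n]] unfolding g_def by (smt (verit) zero_le_power2)
  have g2: "g n \<ge> 2" if "n \<in> F" for n
  proof -
    have "norm (complex_of_real R / lam n) = R / norm (lam n)" using R by (simp add: norm_divide)
    also have "\<dots> \<ge> 1" using that r_pos[of n] by (simp add: F_def)
    finally have "1 \<le> norm (complex_of_real R / lam n) ^ 2" by simp
    then show ?thesis using norm_one_plus_sq[OF ReP[of n]] unfolding g_def by simp
  qed
  obtain N0 where N0: "F \<subseteq> {..<N0}" using finite_le[of R] unfolding F_def finite_nat_iff_bounded by blast
  have P: "(\<lambda>N. \<Prod>n<N. 1 + complex_of_real R / lam n) \<longlonglongrightarrow> f (complex_of_real R) / f 0"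
    by (rule has_prod_imp_tendsto'[OF product])
  have lim: "(\<lambda>N. norm (\<Prod>n<N. 1 + complex_of_real R / lam n) ^ 2) \<longlonglongrightarrow> norm (f (complex_of_real R) / f 0) ^ 2"
    by (intro tendsto_intros P)
  have ev: "eventually (\<lambda>N. 2 ^ card F \<le> norm (\<Prod>n<N. 1 + complex_of_real R / lam n) ^ 2) sequentially"
    using eventually_ge_at_top[of N0]
  proof eventually_elim
    case (elim N)
    have sub: "F \<subseteq> {..<N}" using N0 elim by auto
    have "norm (\<Prod>n<N. 1 + complex_of_real R / lam n) ^ 2 = (\<Prod>n<N. g n)"
      unfolding g_def by (simp add: prod_norm[symmetric] prod_power_distrib)
    also have "\<dots> = (\<Prod>n\<in>{..<N} - F. g n) * (\<Prod>n\<in>F. g n)"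
      by (rule prod.subset_diff[OF sub]) simp
    also have "\<dots> \<ge> 1 * (\<Prod>n\<in>F. (2::real))"
    proof -
      have p1: "1 \<le> (\<Prod>n\<in>{..<N} - F. g n)" by (rule prod_ge_1) (rule g1)
      have p2: "(\<Prod>n\<in>F. (2::real)) \<le> (\<Prod>n\<in>F. g n)" by (rule prod_mono) (use g2 in auto)
      show ?thesis by (rule mult_mono[OF p1 p2]) (use p1 in auto)
    qed
    finally show ?case by simp
  qed
  have "2 ^ card F \<le> norm (f (complex_of_real R) / f 0) ^ 2"
    by (rule tendsto_lowerbound[OF lim ev]) simp
  then show ?thesis unfolding F_def by (simp add: norm_divide)
qed

lemma count_growth:
  assumes \<sigma>: "\<sigma> > 0" and C: "\<And>R. R \<ge> 1 \<Longrightarrow> norm (f (complex_of_real R)) \<le> exp (C * R powr \<sigma>)"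
  shows "\<exists>C'. \<forall>R\<ge>1. real (card {n. norm (lam n) \<le> R}) \<le> C' * R powr \<sigma>"
proof -
  define a0 where "a0 = norm (f 0)"
  have a0: "a0 > 0" using f0(2) unfolding a0_def by simp
  define C' where "C' = 2 * (\<bar>C\<bar> + \<bar>ln a0\<bar>) / ln 2"
  show ?thesis
  proof (intro exI[of _ C'] allI impI)
    fix R :: real assume R: "R \<ge> 1"
    define c where "c = card {n. norm (lam n) \<le> R}"
    have Rs: "R powr \<sigma> \<ge> 1" using R \<sigma> by (simp add: ge_one_powr_ge_zero)
    have "(2::real) ^ c \<le> (norm (f (complex_of_real R)) / a0) ^ 2"
      using count_bound[of R] R unfolding c_def a0_def by simp
    also have "\<dots> \<le> (exp (C * R powr \<sigma>) / a0) ^ 2"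
      using C[OF R] a0 by (intro power_mono divide_right_mono) auto
    finally have "ln ((2::real) ^ c) \<le> ln ((exp (C * R powr \<sigma>) / a0) ^ 2)"
      using a0 by (subst ln_le_cancel_iff) auto
    then have "real c * ln 2 \<le> 2 * (C * R powr \<sigma> - ln a0)"
      using a0 by (simp add: ln_realpow ln_div)
    also have "\<dots> \<le> 2 * ((\<bar>C\<bar> + \<bar>ln a0\<bar>) * R powr \<sigma>)"
    proof -
      have "C * R powr \<sigma> \<le> \<bar>C\<bar> * R powr \<sigma>" using Rs by (intro mult_right_mono) auto
      moreover have "- ln a0 \<le> \<bar>ln a0\<bar> * R powr \<sigma>"
        using Rs by (smt (verit) mult_le_cancel_left1)
      ultimately show ?thesis by (simp add: algebra_simps)
    qed
    finally have "real c \<le> 2 * ((\<bar>C\<bar> + \<bar>ln a0\<bar>) * R powr \<sigma>) / ln 2"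
      by (simp add: field_simps)
    moreover have eq: "C' * R powr \<sigma> = 2 * ((\<bar>C\<bar> + \<bar>ln a0\<bar>) * R powr \<sigma>) / ln 2" unfolding C'_def by simp
    ultimately show "real (card {n. norm (lam n) \<le> R}) \<le> C' * R powr \<sigma>"
      unfolding c_def by linarith
  qed
qed

end

context fsys
begin

lemma summable_from_count:
  assumes \<sigma>: "\<sigma> > 0" "\<sigma> < \<alpha>"
    and C': "\<And>R. R \<ge> 1 \<Longrightarrow> real (card {n. norm (lam n) \<le> R}) \<le> C' * R powr \<sigma>"
  shows "summable (\<lambda>n. norm (lam n) powr (- \<alpha>))"
proof -
  have \<alpha>: "\<alpha> > 0" using \<sigma> by simp
  obtain m where m: "m > 0" "\<And>n. m \<le> norm (lam n)" using r_lower by blast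
  define j where "j n = nat \<lceil>log 2 (norm (lam n))\<rceil>" for n
  define D where "D = m powr (- \<alpha>) + 2 powr \<alpha>"
  have C'0: "C' \<ge> 0" using C'[of 1] by simp
  have b2: "norm (lam n) \<le> 2 powr real (j n)" for n
  proof -
    have rp: "norm (lam n) > 0" by (rule r_pos)
    have l: "log 2 (norm (lam n)) \<le> real (j n)" unfolding j_def by linarith
    have e: "2 powr log 2 (norm (lam n)) = norm (lam n)" using rp by simp
    have "2 powr log 2 (norm (lam n)) \<le> 2 powr real (j n)" by (rule powr_mono[OF l]) simp
    then show ?thesis unfolding e .
  qed
  have b1: "norm (lam n) powr (- \<alpha>) \<le> D * 2 powr (- \<alpha> * real (j n))" for n
  proof (cases "j n = 0")
    case True
    have "norm (lam n) powr (- \<alpha>) \<le> m powr (- \<alpha>)"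
      using m \<alpha> by (intro powr_mono2') auto
    also have "\<dots> \<le> D" unfolding D_def by simp
    finally show ?thesis using True by simp
  next
    case False
    have rp: "norm (lam n) > 0" by (rule r_pos)
    have "real (j n) - 1 < log 2 (norm (lam n))"
      using False ceiling_correct[of "log 2 (norm (lam n))"] unfolding j_def by linarith
    then have lt: "2 powr (real (j n) - 1) < norm (lam n)"
      using rp by (simp add: less_log_iff)
    have "norm (lam n) powr (- \<alpha>) \<le> (2 powr (real (j n) - 1)) powr (- \<alpha>)"
      using lt \<alpha> by (intro powr_mono2') auto
    also have "\<dots> = 2 powr \<alpha> * 2 powr (- \<alpha> * real (j n))"
      by (simp add: powr_powr powr_add[symmetric] algebra_simps)
    also have "\<dots> \<le> D * 2 powr (- \<alpha> * real (j n))"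
      unfolding D_def by (intro mult_right_mono) auto
    finally show ?thesis .
  qed
  define qq where "qq = 2 powr (\<sigma> - \<alpha>)"
  have qq: "0 < qq" "qq < 1" using \<sigma> unfolding qq_def by (auto intro: powr_less_one)
  have geo: "summable (\<lambda>y. C' * qq ^ y)" using qq by (intro summable_mult summable_geometric) simp
  show ?thesis
  proof (rule bounded_imp_summable)
    show "0 \<le> norm (lam n) powr (- \<alpha>)" for n by simp
    fix N :: nat
    define S where "S = {..N}"
    have "(\<Sum>n\<le>N. norm (lam n) powr (- \<alpha>)) \<le> (\<Sum>n\<in>S. D * 2 powr (- \<alpha> * real (j n)))"
      unfolding S_def by (intro sum_mono b1)
    also have "\<dots> = (\<Sum>y\<in>j ` S. \<Sum>n\<in>{x\<in>S. j x = y}. D * 2 powr (- \<alpha> * real (j n)))"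
      by (rule sum.group[symmetric]) (auto simp: S_def)
    also have "\<dots> = (\<Sum>y\<in>j ` S. D * (real (card {x\<in>S. j x = y}) * 2 powr (- \<alpha> * real y)))"
      by (intro sum.cong refl) (simp add: sum_distrib_left[symmetric])
    also have "\<dots> \<le> (\<Sum>y\<in>j ` S. D * (C' * qq ^ y))"
    proof (intro sum_mono mult_left_mono)
      fix y assume "y \<in> j ` S"
      have "{x\<in>S. j x = y} \<subseteq> {n. norm (lam n) \<le> 2 powr real y}" using b2 by auto
      then have "card {x\<in>S. j x = y} \<le> card {n. norm (lam n) \<le> 2 powr real y}"
        by (intro card_mono finite_le)
      also have "real \<dots> \<le> C' * (2 powr real y) powr \<sigma>"
        by (rule C') (simp add: ge_one_powr_ge_zero)
      finally have "real (card {x\<in>S. j x = y}) \<le> C' * (2 powr real y) powr \<sigma>" by simp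
      then have "real (card {x\<in>S. j x = y}) * 2 powr (- \<alpha> * real y) \<le> C' * (2 powr real y) powr \<sigma> * 2 powr (- \<alpha> * real y)"
        by (intro mult_right_mono) auto
      also have "\<dots> = C' * qq ^ y"
        unfolding qq_def by (simp add: powr_powr powr_power powr_add[symmetric] algebra_simps)
      finally show "real (card {x\<in>S. j x = y}) * 2 powr (- \<alpha> * real y) \<le> C' * qq ^ y" .
    qed (simp add: D_def)
    also have "\<dots> = D * (\<Sum>y\<in>j ` S. C' * qq ^ y)" by (simp add: sum_distrib_left)
    also have "\<dots> \<le> D * (\<Sum>y. C' * qq ^ y)"
      by (intro mult_left_mono sum_le_suminf geo) (use C'0 qq in \<open>auto simp: D_def S_def\<close>)
    finally show "(\<Sum>n\<le>N. norm (lam n) powr (- \<alpha>)) \<le> D * (\<Sum>y. C' * qq ^ y)" .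
  qed
qed

end

context fsys
begin

lemma summable_order:
  assumes "coeff_order a < ereal \<alpha>"
  shows "\<alpha> > 0" "summable (\<lambda>n. norm (lam n) powr (- \<alpha>))"
proof -
  have nn: "coeff_order a \<ge> 0" by (rule order_nonneg)
  have "0 < ereal \<alpha>" using nn assms by (rule order_le_less_trans)
  then show \<alpha>: "\<alpha> > 0" by simp
  obtain \<rho> where \<rho>: "coeff_order a = ereal \<rho>"
    using nn assms by (cases "coeff_order a") auto
  have \<rho>0: "\<rho> \<ge> 0" "\<rho> < \<alpha>" using nn assms \<rho> by auto
  define \<sigma> where "\<sigma> = (\<rho> + \<alpha>) / 2"
  have \<sigma>: "\<sigma> > 0" "\<sigma> < \<alpha>" "coeff_order a < ereal \<sigma>" using \<rho>0 \<rho> by (auto simp: \<sigma>_def)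
  obtain N0 where N0: "N0 \<ge> 1" "\<And>n. n \<ge> N0 \<Longrightarrow> \<bar>a n\<bar> \<le> exp (- (real n * ln (real n)) / \<sigma>)"
    using coeff_bound[OF \<sigma>(1,3)] by blast
  obtain C where C: "\<And>R. R \<ge> 1 \<Longrightarrow> norm (f (complex_of_real R)) \<le> exp (C * R powr \<sigma>)"
    using f_growth[OF \<sigma>(1) N0] by blast
  obtain C' where C': "\<And>R. R \<ge> 1 \<Longrightarrow> real (card {n. norm (lam n) \<le> R}) \<le> C' * R powr \<sigma>"
    using count_growth[OF \<sigma>(1) C] by blast
  show "summable (\<lambda>n. norm (lam n) powr (- \<alpha>))"
    by (rule summable_from_count[OF \<sigma>(1,2) C'])
qed

end

theorem lemma2:
  fixes a :: "nat \<Rightarrow> real" and f :: "complex \<Rightarrow> complex"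
    and lam :: "nat \<Rightarrow> complex" and \<beta>0 :: real
    and \<Theta> :: "real \<Rightarrow> complex"
  assumes f_series: "\<And>z. (\<lambda>n. complex_of_real (a n) * z ^ n) sums f z"
    and coeff_pos: "\<And>n. a 0 * a n > 0"
    and order_lt1: "coeff_order a < 1"
    and nonzero_root: "\<exists>z. z \<noteq> 0 \<and> f z = 0"
    and product: "\<And>z. (\<lambda>n. 1 + z / lam n) has_prod (f z / f 0)"
    and summable_inv: "summable (\<lambda>n. 1 / norm (lam n))"
    and \<beta>0: "0 < \<beta>0" "\<beta>0 < 1"
    and sector: "\<And>n. Re (lam n) \<ge> \<beta>0 * norm (lam n) \<and> \<beta>0 * norm (lam n) > 0"
    and \<Theta>_def: "\<And>t. t > 0 \<Longrightarrow> \<Theta> t = (\<Sum>n. exp (- (lam n * complex_of_real t)))"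
  shows
    "(\<forall>k. \<forall>t>0. (vderiv_iter k \<Theta> has_vector_derivative vderiv_iter (Suc k) \<Theta> t) (at t))
     \<and> (\<forall>(k::nat) (\<alpha>::real). coeff_order a < ereal \<alpha> \<and> \<alpha> < 1 \<longrightarrow>
          (\<lambda>t. norm (vderiv_iter k \<Theta> t)) \<in> O[at_right 0](\<lambda>t. t powr (- \<alpha> - real k)))
     \<and> (\<forall>(k::nat) (\<beta>::real). 0 < \<beta> \<and> \<beta> < \<beta>0 * (INF n. norm (lam n)) \<longrightarrow>
          (\<lambda>t. norm (vderiv_iter k \<Theta> t)) \<in> O[at_top](\<lambda>t. exp (- \<beta> * t)))
     \<and> (\<forall>(k::nat) (x::real). x \<ge> 0 \<longrightarrow>
          set_integrable lborel {0<..} (\<lambda>t. t ^ k * exp (- x * t) * norm (\<Theta> t))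
        \<and> (LINT t:{0<..}|lborel. t ^ k * exp (- x * t) * norm (\<Theta> t))
            \<le> fact k / \<beta>0 ^ (k + 1) * (\<Sum>n. 1 / norm (lam n) ^ (k + 1))
        \<and> summable (\<lambda>n. 1 / norm (lam n) ^ (k + 1)))
     \<and> (\<forall>(k::nat) (x::real). x \<ge> 0 \<longrightarrow>
          (\<lambda>n. complex_of_real (fact k) / (complex_of_real x + lam n) ^ (k + 1))
            sums ((-1) ^ k * (deriv ^^ k) (\<lambda>z. deriv f z / f z) (complex_of_real x))
        \<and> set_integrable lborel {0<..} (\<lambda>t. complex_of_real (exp (- x * t) * t ^ k) * \<Theta> t)
        \<and> (-1) ^ k * (deriv ^^ k) (\<lambda>z. deriv f z / f z) (complex_of_real x)
            = (LINT t:{0<..}|lborel. complex_of_real (exp (- x * t) * t ^ k) * \<Theta> t))"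
proof -
  interpret fsys lam \<beta>0 f a
    by unfold_locales (use \<beta>0 sector summable_inv f_series coeff_pos product in auto)
  have \<Theta>G: "\<And>t. t > 0 \<Longrightarrow> \<Theta> t = G 0 t" using \<Theta>_def by (simp add: G_def th_def)
  have VG: "\<And>k t. t > 0 \<Longrightarrow> vderiv_iter k \<Theta> t = G k t" by (rule vderiv_G[OF \<Theta>G])
  have P1: "\<forall>k. \<forall>t>0. (vderiv_iter k \<Theta> has_vector_derivative vderiv_iter (Suc k) \<Theta> t) (at t)"
  proof (intro allI impI)
    fix k :: nat and t :: real assume t: "t > 0"
    have "(vderiv_iter k \<Theta> has_vector_derivative G (Suc k) t) (at t)"
      by (rule has_vector_derivative_transform_within_open[OF G_deriv[OF t] open_greaterThan[of 0]])
         (use t VG in auto)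
    then show "(vderiv_iter k \<Theta> has_vector_derivative vderiv_iter (Suc k) \<Theta> t) (at t)"
      using VG[OF t, of "Suc k"] by simp
  qed
  have P2: "\<forall>(k::nat) (\<alpha>::real). coeff_order a < ereal \<alpha> \<and> \<alpha> < 1 \<longrightarrow>
          (\<lambda>t. norm (vderiv_iter k \<Theta> t)) \<in> O[at_right 0](\<lambda>t. t powr (- \<alpha> - real k))"
  proof (intro allI impI)
    fix k :: nat and \<alpha> :: real assume h: "coeff_order a < ereal \<alpha> \<and> \<alpha> < 1"
    have big: "(\<lambda>t. norm (G k t)) \<in> O[at_right 0](\<lambda>t. t powr (- \<alpha> - real k))"
      using h summable_order[of \<alpha>] by (intro G_bigo_0) auto
    have ev: "eventually (\<lambda>t. norm (G k t) = norm (vderiv_iter k \<Theta> t)) (at_right 0)"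
      using eventually_at_right_less[of 0] by eventually_elim (simp add: VG)
    show "(\<lambda>t. norm (vderiv_iter k \<Theta> t)) \<in> O[at_right 0](\<lambda>t. t powr (- \<alpha> - real k))"
      by (rule iffD1[OF landau_o.big.in_cong[OF ev] big])
  qed
  have P3: "\<forall>(k::nat) (\<beta>::real). 0 < \<beta> \<and> \<beta> < \<beta>0 * (INF n. norm (lam n)) \<longrightarrow>
          (\<lambda>t. norm (vderiv_iter k \<Theta> t)) \<in> O[at_top](\<lambda>t. exp (- \<beta> * t))"
  proof (intro allI impI)
    fix k :: nat and \<beta> :: real assume h: "0 < \<beta> \<and> \<beta> < \<beta>0 * (INF n. norm (lam n))"
    have "\<beta> < \<beta>0 * norm (lam n)" for n
    proof -
      have "(INF n. norm (lam n)) \<le> norm (lam n)"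
        by (rule cINF_lower) (auto intro: bdd_belowI[of _ 0])
      then have "\<beta>0 * (INF n. norm (lam n)) \<le> \<beta>0 * norm (lam n)"
        using \<beta>0 by (intro mult_left_mono) auto
      then show ?thesis using h by simp
    qed
    then have big: "(\<lambda>t. norm (G k t)) \<in> O[at_top](\<lambda>t. exp (- \<beta> * t))"
      using h by (intro G_bigo_inf) auto
    have ev: "eventually (\<lambda>t. norm (G k t) = norm (vderiv_iter k \<Theta> t)) at_top"
      using eventually_gt_at_top[of 0] by eventually_elim (simp add: VG)
    show "(\<lambda>t. norm (vderiv_iter k \<Theta> t)) \<in> O[at_top](\<lambda>t. exp (- \<beta> * t))"
      by (rule iffD1[OF landau_o.big.in_cong[OF ev] big])
  qed
  have P4: "\<forall>(k::nat) (x::real). x \<ge> 0 \<longrightarrow>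
          set_integrable lborel {0<..} (\<lambda>t. t ^ k * exp (- x * t) * norm (\<Theta> t))
        \<and> (LINT t:{0<..}|lborel. t ^ k * exp (- x * t) * norm (\<Theta> t))
            \<le> fact k / \<beta>0 ^ (k + 1) * (\<Sum>n. 1 / norm (lam n) ^ (k + 1))
        \<and> summable (\<lambda>n. 1 / norm (lam n) ^ (k + 1))"
  proof (intro allI impI conjI)
    fix k :: nat and x :: real assume x: "x \<ge> 0"
    show "set_integrable lborel {0<..} (\<lambda>t. t ^ k * exp (- x * t) * norm (\<Theta> t))"
      by (rule integral_part(1)[OF \<Theta>G x])
    show "(LINT t:{0<..}|lborel. t ^ k * exp (- x * t) * norm (\<Theta> t))
            \<le> fact k / \<beta>0 ^ (k + 1) * (\<Sum>n. 1 / norm (lam n) ^ (k + 1))"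
      by (rule integral_part(2)[OF \<Theta>G x])
    show "summable (\<lambda>n. 1 / norm (lam n) ^ (k + 1))" by (rule summable_pow)
  qed
  have P5: "\<forall>(k::nat) (x::real). x \<ge> 0 \<longrightarrow>
          (\<lambda>n. complex_of_real (fact k) / (complex_of_real x + lam n) ^ (k + 1))
            sums ((-1) ^ k * (deriv ^^ k) (\<lambda>z. deriv f z / f z) (complex_of_real x))
        \<and> set_integrable lborel {0<..} (\<lambda>t. complex_of_real (exp (- x * t) * t ^ k) * \<Theta> t)
        \<and> (-1) ^ k * (deriv ^^ k) (\<lambda>z. deriv f z / f z) (complex_of_real x)
            = (LINT t:{0<..}|lborel. complex_of_real (exp (- x * t) * t ^ k) * \<Theta> t)"
  proof (intro allI impI conjI)
    fix k :: nat and x :: real assume x: "x \<ge> 0"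
    show S1: "(\<lambda>n. complex_of_real (fact k) / (complex_of_real x + lam n) ^ (k + 1))
            sums ((-1) ^ k * (deriv ^^ k) (\<lambda>z. deriv f z / f z) (complex_of_real x))"
      by (rule logderiv_part[OF x])
    show "set_integrable lborel {0<..} (\<lambda>t. complex_of_real (exp (- x * t) * t ^ k) * \<Theta> t)"
      by (rule integral_part(3)[OF \<Theta>G x])
    show "(-1) ^ k * (deriv ^^ k) (\<lambda>z. deriv f z / f z) (complex_of_real x)
            = (LINT t:{0<..}|lborel. complex_of_real (exp (- x * t) * t ^ k) * \<Theta> t)"
      using sums_unique2[OF S1 integral_part(4)[OF \<Theta>G x]] .
  qed
  show ?thesis by (intro conjI) (fact P1, fact P2, fact P3, fact P4, fact P5)
qed

end
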